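(* Let $\mathcal{S}$ be a nonempty semigroup (not necessarily finite), with Erdős–Burgess constant $\textsc{I}(\mathcal{S})$ and strong Erdős–Burgess constant $\textsc{SI}(\mathcal{S})$. Then: (i) if $\textsc{I}(\mathcal{S})$ or $\textsc{SI}(\mathcal{S})$ is finite, then the cyclic subsemigroup $\langle x\rangle$ is finite for every $x\in\mathcal{S}$; (ii) $\textsc{I}(\mathcal{S})\le\textsc{SI}(\mathcal{S})$, and if $\mathcal{S}$ is commutative then $\textsc{I}(\mathcal{S})=\textsc{SI}(\mathcal{S})$. Moreover, if $|\mathcal{S}\setminus E(\mathcal{S})|$ is finite, then $\textsc{I}(\mathcal{S})=|\mathcal{S}\setminus E(\mathcal{S})|+1$ if and only if there exists an $\mathcal{S}$-valued sequence $T$ of length $|\mathcal{S}\setminus E(\mathcal{S})|$ such that $\mathcal{R}=\langle\mathrm{supp}(T)\rangle$ is a finite commutative semigroup with $\mathcal{S}\setminus\mathcal{R}\subseteq E(\mathcal{S})$, the universal semilattice $Y(\mathcal{R})$ is a chain, $x_1*x_2=x_1$ for all $x_1,x_2\in\mathcal{R}$ with $x_1\lneqq_{\mathcal{N}_{\mathcal{R}}}x_2$, each archimedean component of $\mathcal{R}$ is either a finite cyclic semigroup $\langle x\rangle$ with $x\in\mathrm{supp}(T)$ and $\mathcal{I}(x)\equiv1\pmod{\mathcal{P}(x)}$ or an ideal extension of a nontrivial finite cyclic group $\langle x_2\rangle$ by a nontrivial finite cyclic nilsemigroup $\langle x_1\rangle$ with $x_1,x_2\in\mathrm{supp}(T)$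 and $x_1*e_{\langle x_2\rangle}=e_{\langle x_2\rangle}$ ($e_{\langle x_2\rangle}$ the identity of $\langle x_2\rangle$), and $\mathrm{v}_x(T)=\mathcal{I}(x)+\mathcal{P}(x)-2$ for each $x\in\mathrm{supp}(T)$.
   Context: $(\mathcal{S},* )$ is a semigroup and $E(\mathcal{S})=\{e: e*e=e\}$. A finite sequence $T$ over $\mathcal{S}$ is (weakly) idempotent-product free if no nonempty subsequence of $T$ has a product, in any order of its terms, lying in $E(\mathcal{S})$; it is strongly idempotent-product free if no nonempty subsequence has its product in the natural order of $T$ lying in $E(\mathcal{S})$. $\textsc{I}(\mathcal{S})$ is the least $\ell\in\mathbb{N}\cup\{\infty\}$ such that every $\mathcal{S}$-valued sequence of length $\ell$ is not weakly idempotent-product free, and $\textsc{SI}(\mathcal{S})$ is the least $\ell\in\mathbb{N}\cup\{\infty\}$ such that every $\mathcal{S}$-valued sequence of length $\ell$ is not strongly idempotent-product free (equivalently, the suprema of $|T|+1$ over the respective free sequences $T$). $\mathrm{supp}(T)$ is the set of elements occurring in $T$, $\mathrm{v}_x(T)$ the multiplicity of $x$ in $T$. Index $\mathcal{I}(x)$: least $r>0$ with $x^r=x^t$ for some positive $t\ne r$; period $\mathcal{P}(x)$: least $k>0$ with $x^{\mathcal{I}(x)+k}=x^{\mathcal{I}(x)}$. For commutative $\mathcal{R}$: $a\leqq_{\mathcal{N}_{\mathcal{R}}}b$ means $a^m=b*c$ for some $c\in\mathcal{R}$, $m>0$; $\lneqq$ means $\leqq$ but not the reverse; $a\,\mathcal{N}_{\mathcal{R}}\,b$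 means both $a\leqq b$ and $b\leqq a$; $Y(\mathcal{R})=\mathcal{R}/\mathcal{N}_{\mathcal{R}}$ is the universal semilattice and its classes are the archimedean components. A nilsemigroup has a zero and every element has a power equal to zero. An ideal extension of $G$ by $Q$ is a semigroup $B$ containing $G$ as an ideal with Rees quotient $B/G\cong Q$. *)

theory Defs
  imports Main "HOL-Library.Extended_Nat" "HOL-Library.Multiset"
begin

(* A semigroup is modelled as a carrier S :: 'a set, closed under the
   (associative) type-class multiplication of 'a :: semigroup_mult. *)

fun sprod :: "'a::semigroup_mult list \<Rightarrow> 'a" where
  "sprod [] = undefined"
| "sprod [x] = x"
| "sprod (x # y # xs) = x * sprod (y # xs)"

fun spow :: "'a::semigroup_mult \<Rightarrow> nat \<Rightarrow> 'a" where
  "spow x 0 = undefined"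
| "spow x (Suc 0) = x"
| "spow x (Suc (Suc n)) = x * spow x (Suc n)"

definition cyc :: "'a::semigroup_mult \<Rightarrow> 'a set" where
  "cyc x = {spow x n | n. n \<ge> 1}"

definition gen :: "'a::semigroup_mult set \<Rightarrow> 'a set" where
  "gen A = {sprod xs | xs. xs \<noteq> [] \<and> set xs \<subseteq> A}"

definition Idem :: "'a::semigroup_mult set \<Rightarrow> 'a set" where
  "Idem S = {e \<in> S. e * e = e}"

(* weakly idempotent-product free: no nonempty subsequence has a product,
   in any order of its terms, that is idempotent *)
definition weak_ipf :: "'a::semigroup_mult set \<Rightarrow> 'a list \<Rightarrow> bool" where
  "weak_ipf S T \<longleftrightarrow>
     (\<forall>U. U \<noteq> [] \<longrightarrow> mset U \<subseteq># mset T \<longrightarrow> sprod U \<notin> Idem S)"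

(* strongly idempotent-product free: no nonempty subsequence has its product,
   taken in the natural order of T, idempotent *)
definition strong_ipf :: "'a::semigroup_mult set \<Rightarrow> 'a list \<Rightarrow> bool" where
  "strong_ipf S T \<longleftrightarrow>
     (\<forall>I. I \<noteq> {} \<longrightarrow> I \<subseteq> {..<length T} \<longrightarrow> sprod (nths T I) \<notin> Idem S)"

(* Erdos-Burgess constant I(S): least l in N \<union> {\<infinity>} such that every
   S-valued sequence of length l is not weakly idempotent-product free *)
definition EB_I :: "'a::semigroup_mult set \<Rightarrow> enat" where
  "EB_I S = Inf {enat l | l. \<forall>T. set T \<subseteq> S \<and> length T = l \<longrightarrow> \<not> weak_ipf S T}"

definition EB_SI :: "'a::semigroup_mult set \<Rightarrow> enat" where
  "EB_SI S = Inf {enat l | l. \<forall>T. set T \<subseteq> S \<and> length T = l \<longrightarrow> \<not> strong_ipf S T}"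

definition commutative_on :: "'a::semigroup_mult set \<Rightarrow> bool" where
  "commutative_on R \<longleftrightarrow> (\<forall>a\<in>R. \<forall>b\<in>R. a * b = b * a)"

definition sindex :: "'a::semigroup_mult \<Rightarrow> nat" where
  "sindex x = (LEAST r. r > 0 \<and> (\<exists>t. t > 0 \<and> t \<noteq> r \<and> spow x r = spow x t))"

definition speriod :: "'a::semigroup_mult \<Rightarrow> nat" where
  "speriod x = (LEAST k. k > 0 \<and> spow x (sindex x + k) = spow x (sindex x))"

definition leqN :: "'a::semigroup_mult set \<Rightarrow> 'a \<Rightarrow> 'a \<Rightarrow> bool" where
  "leqN R a b \<longleftrightarrow> (\<exists>m>0. \<exists>c\<in>R. spow a m = b * c)"

definition lneqN :: "'a::semigroup_mult set \<Rightarrow> 'a \<Rightarrow> 'a \<Rightarrow> bool" where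
  "lneqN R a b \<longleftrightarrow> leqN R a b \<and> \<not> leqN R b a"

definition relN :: "'a::semigroup_mult set \<Rightarrow> 'a \<Rightarrow> 'a \<Rightarrow> bool" where
  "relN R a b \<longleftrightarrow> leqN R a b \<and> leqN R b a"

definition arch_components :: "'a::semigroup_mult set \<Rightarrow> 'a set set" where
  "arch_components R = {{b \<in> R. relN R a b} | a. a \<in> R}"

(* the universal semilattice Y(R) = R/N_R, ordered by [a] \<le> [b] iff a \<le>_N b,
   is a chain *)
definition Y_chain :: "'a::semigroup_mult set \<Rightarrow> bool" where
  "Y_chain R \<longleftrightarrow> (\<forall>a\<in>R. \<forall>b\<in>R. leqN R a b \<or> leqN R b a)"

definition is_identity :: "'a::semigroup_mult set \<Rightarrow> 'a \<Rightarrow> bool" where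
  "is_identity G e \<longleftrightarrow> e \<in> G \<and> (\<forall>g\<in>G. e * g = g \<and> g * e = g)"

definition is_group :: "'a::semigroup_mult set \<Rightarrow> bool" where
  "is_group G \<longleftrightarrow> (\<forall>a\<in>G. \<forall>b\<in>G. a * b \<in> G) \<and>
     (\<exists>e. is_identity G e \<and> (\<forall>g\<in>G. \<exists>h\<in>G. g * h = e \<and> h * g = e))"

definition is_ideal :: "'a::semigroup_mult set \<Rightarrow> 'a set \<Rightarrow> bool" where
  "is_ideal C G \<longleftrightarrow> G \<subseteq> C \<and> (\<forall>c\<in>C. \<forall>g\<in>G. c * g \<in> G \<and> g * c \<in> G)"

(* The Rees quotient C/G is a nontrivial cyclic nilsemigroup generated by the
   class of x: x \<notin> G (nontrivial), every element of C \<setminus> G is a power of x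
   (cyclic, generated by [x]), and some power of x lies in G, i.e. equals the
   zero of C/G (nil). *)
definition rees_cyclic_nil :: "'a::semigroup_mult set \<Rightarrow> 'a set \<Rightarrow> 'a \<Rightarrow> bool" where
  "rees_cyclic_nil C G x \<longleftrightarrow> x \<in> C - G \<and> C - G \<subseteq> cyc x \<and> (\<exists>n\<ge>1. spow x n \<in> G)"

definition ideal_ext_cyc :: "'a::semigroup_mult set \<Rightarrow> 'a \<Rightarrow> 'a \<Rightarrow> bool" where
  "ideal_ext_cyc C x1 x2 \<longleftrightarrow>
     (\<forall>a\<in>C. \<forall>b\<in>C. a * b \<in> C) \<and> finite C \<and>
     is_group (cyc x2) \<and> finite (cyc x2) \<and> card (cyc x2) \<ge> 2 \<and>
     is_ideal C (cyc x2) \<and> rees_cyclic_nil C (cyc x2) x1"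

end

theory Submission
  imports Defs
begin

lemma spow_Suc: "n \<ge> 1 \<Longrightarrow> spow x (Suc n) = x * spow x n"
  by (cases n) auto

lemma spow_1[simp]: "spow x 1 = x" by simp

lemma spow_add: "m \<ge> 1 \<Longrightarrow> n \<ge> 1 \<Longrightarrow> spow x (m + n) = spow x m * spow x n"
proof (induction m rule: nat_induct_at_least)
  case base then show ?case using spow_Suc[of n x] by simp
next
  case (Suc m)
  have "spow x (Suc m + n) = x * spow x (m + n)" using Suc spow_Suc[of "m+n" x] by simp
  also have "\<dots> = x * (spow x m * spow x n)" using Suc by simp
  also have "\<dots> = spow x (Suc m) * spow x n" using Suc spow_Suc[of m x] by (simp add: mult.assoc)
  finally show ?case .
qed

lemma spow_Suc': "n \<ge> 1 \<Longrightarrow> spow x (Suc n) = spow x n * x"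
  using spow_add[of n 1 x] by simp

lemma spow_mult: "n \<ge> 1 \<Longrightarrow> m \<ge> 1 \<Longrightarrow> spow (spow x m) n = spow x (m * n)"
proof (induction n rule: nat_induct_at_least)
  case base then show ?case by simp
next
  case (Suc n)
  have "spow (spow x m) (Suc n) = spow x m * spow (spow x m) n" using Suc spow_Suc by blast
  also have "\<dots> = spow x m * spow x (m*n)" using Suc by simp
  also have "\<dots> = spow x (m + m*n)" using Suc by (simp add: spow_add)
  finally show ?case by simp
qed

lemma spow_in: "n \<ge> 1 \<Longrightarrow> x \<in> S \<Longrightarrow> \<forall>a\<in>S. \<forall>b\<in>S. a * b \<in> S \<Longrightarrow> spow x n \<in> S"
proof (induction n rule: nat_induct_at_least)
  case base then show ?case by simp
next
  case (Suc n) then show ?case using spow_Suc by metis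
qed

lemma sprod_Cons: "xs \<noteq> [] \<Longrightarrow> sprod (x # xs) = x * sprod xs"
  by (cases xs) auto

lemma sprod_append: "xs \<noteq> [] \<Longrightarrow> ys \<noteq> [] \<Longrightarrow> sprod (xs @ ys) = sprod xs * sprod ys"
proof (induction xs)
  case Nil then show ?case by simp
next
  case (Cons a xs)
  show ?case
  proof (cases "xs = []")
    case True then show ?thesis using Cons sprod_Cons[of ys a] by simp
  next
    case False then show ?thesis using Cons sprod_Cons[of xs a] sprod_Cons[of "xs@ys" a] by (simp add: mult.assoc)
  qed
qed

lemma sprod_snoc: "xs \<noteq> [] \<Longrightarrow> sprod (xs @ [x]) = sprod xs * x"
  using sprod_append[of xs "[x]"] by simp

lemma sprod_replicate: "n \<ge> 1 \<Longrightarrow> sprod (replicate n x) = spow x n"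
proof (induction n rule: nat_induct_at_least)
  case base then show ?case by simp
next
  case (Suc n)
  then show ?case using sprod_Cons[of "replicate n x" x] spow_Suc[of n x] by (cases n) auto
qed

lemma sprod_in: "xs \<noteq> [] \<Longrightarrow> set xs \<subseteq> S \<Longrightarrow> \<forall>a\<in>S. \<forall>b\<in>S. a * b \<in> S \<Longrightarrow> sprod xs \<in> S"
proof (induction xs)
  case Nil then show ?case by simp
next
  case (Cons a xs) then show ?case by (cases "xs = []") (auto simp: sprod_Cons)
qed


lemma spow_shift: "a \<ge> 1 \<Longrightarrow> b \<ge> 1 \<Longrightarrow> spow x a = spow x b \<Longrightarrow> spow x (a + n) = spow x (b + n)"
  by (cases "n = 0") (auto simp: spow_add)

lemma per1: assumes "a \<ge> 1" "spow x a = spow x (a + d)" "n \<ge> a"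
  shows "spow x (n + d) = spow x n"
proof -
  have "spow x (a + (n - a)) = spow x (a + d + (n - a))"
    using spow_shift[OF _ _ assms(2), of "n-a"] assms(1) by (simp add: add.assoc)
  then show ?thesis using assms(3) by (simp add: algebra_simps)
qed

lemma perm: assumes "a \<ge> 1" "spow x a = spow x (a + d)" "n \<ge> a"
  shows "spow x (n + m * d) = spow x n"
proof (induction m)
  case 0 then show ?case by simp
next
  case (Suc m)
  have "spow x (n + Suc m * d) = spow x ((n + m * d) + d)" by (simp add: algebra_simps)
  also have "\<dots> = spow x (n + m * d)" using per1[OF assms(1,2), of "n + m*d"] assms(3) by simp
  finally show ?case using Suc by simp
qed

lemma permod: assumes "a \<ge> 1" "spow x a = spow x (a + d)" "n \<ge> a" "d > 0"
  shows "spow x n = spow x (a + (n - a) mod d)"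
proof -
  have "n = (a + (n - a) mod d) + ((n - a) div d) * d" using assms(3)
    using mod_div_mult_eq[of "n-a" d] by linarith
  then have "spow x n = spow x ((a + (n - a) mod d) + ((n - a) div d) * d)" by simp
  also have "\<dots> = spow x (a + (n - a) mod d)" by (rule perm[OF assms(1,2)]) simp
  finally show ?thesis .
qed

lemma cyc_sub: assumes "a \<ge> 1" "spow x a = spow x (a + d)" "d > 0"
  shows "cyc x \<subseteq> spow x ` {1..<a+d}"
proof
  fix y assume "y \<in> cyc x"
  then obtain n where n: "y = spow x n" "n \<ge> 1" unfolding cyc_def by auto
  show "y \<in> spow x ` {1..<a+d}"
  proof (cases "n < a + d")
    case True then show ?thesis using n by auto
  next
    case False
    then have "y = spow x (a + (n - a) mod d)" using permod[OF assms(1,2), of n] assms(3) n by simp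
    moreover have "a + (n - a) mod d \<in> {1..<a+d}" using assms by auto
    ultimately show ?thesis by blast
  qed
qed

lemma finite_cyc_if: assumes "a \<ge> 1" "b \<ge> 1" "a \<noteq> b" "spow x a = spow x b"
  shows "finite (cyc x)"
proof (cases "a < b")
  case True
  have "cyc x \<subseteq> spow x ` {1..<a+(b-a)}" using cyc_sub[of a x "b-a"] True assms by simp
  then show ?thesis using finite_subset by blast
next
  case False
  then have "b < a" using assms by simp
  have "cyc x \<subseteq> spow x ` {1..<b+(a-b)}" using cyc_sub[of b x "a-b"] \<open>b<a\<close> assms by simp
  then show ?thesis using finite_subset by blast
qed

lemma finite_cyc_ex: assumes "finite (cyc x)"
  shows "\<exists>r t. r > 0 \<and> t > 0 \<and> t \<noteq> r \<and> spow x r = spow x t"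
proof (rule ccontr)
  assume H: "\<not> ?thesis"
  have "inj_on (\<lambda>n. spow x (Suc n)) UNIV" unfolding inj_on_def
  proof (intro ballI impI)
    fix m n assume "spow x (Suc m) = spow x (Suc n)"
    then show "m = n" using H by (metis Suc_inject zero_less_Suc)
  qed
  moreover have "(\<lambda>n. spow x (Suc n)) ` UNIV \<subseteq> cyc x" unfolding cyc_def by auto
  then have "finite ((\<lambda>n. spow x (Suc n)) ` UNIV)" using assms finite_subset by blast
  ultimately have "finite (UNIV :: nat set)" using finite_imageD by blast
  then show False by simp
qed

lemma spow_idem: "n \<ge> 1 \<Longrightarrow> e * e = e \<Longrightarrow> spow e n = e"
proof (induction n rule: nat_induct_at_least)
  case base then show ?case by simp
next
  case (Suc n) then show ?case using spow_Suc by metis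
qed

lemma idem_unique: assumes "e1 \<in> cyc x" "e2 \<in> cyc x" "e1 * e1 = e1" "e2 * e2 = e2"
  shows "e1 = e2"
proof -
  obtain i j where ij: "e1 = spow x i" "e2 = spow x j" "i \<ge> 1" "j \<ge> 1" using assms(1,2) unfolding cyc_def by auto
  then have "e1 = spow e1 j" "e2 = spow e2 i" using spow_idem[of j e1] spow_idem[of i e2] assms by auto
  moreover have "spow e1 j = spow x (i*j)" "spow e2 i = spow x (j*i)"
    using spow_mult ij by auto
  ultimately show ?thesis by (simp add: mult.commute)
qed

lemma spow_in_cyc: "n \<ge> 1 \<Longrightarrow> spow x n \<in> cyc x" unfolding cyc_def by auto

lemma cyc_mult: assumes "a \<in> cyc x" "b \<in> cyc x" shows "a * b \<in> cyc x"
proof -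
  obtain i j where "a = spow x i" "b = spow x j" "i \<ge> 1" "j \<ge> 1" using assms unfolding cyc_def by auto
  then have "a * b = spow x (i + j)" using spow_add[of i j x] by simp
  then show ?thesis using spow_in_cyc[of "i+j" x] \<open>i \<ge> 1\<close> by simp
qed

lemma cyc_pow: assumes "a \<in> cyc x" "n \<ge> 1" shows "spow a n \<in> cyc x"
proof -
  obtain i where "a = spow x i" "i \<ge> 1" using assms unfolding cyc_def by auto
  then have "spow a n = spow x (i * n)" using spow_mult assms(2) by simp
  then show ?thesis using spow_in_cyc[of "i*n" x] \<open>i \<ge> 1\<close> assms(2) by simp
qed

lemma x_in_cyc: "x \<in> cyc x" using spow_in_cyc[of 1 x] by simp

lemma idem_pow_ex: assumes "finite (cyc x)"
  shows "\<exists>j\<ge>1. spow x j * spow x j = spow x j"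
proof -
  obtain r t where rt: "r > 0" "t > 0" "t \<noteq> r" "spow x r = spow x t" using finite_cyc_ex[OF assms] by blast
  define a where "a = min r t"
  define d where "d = max r t - min r t"
  have ad: "a \<ge> 1" "d > 0" "spow x a = spow x (a + d)" using rt unfolding a_def d_def
    by (auto simp: min_def max_def)
  have "spow x (a*d + a*d) = spow x (a*d)"
    using perm[OF ad(1) ad(3), of "a*d" a] ad by (simp add: mult.commute)
  moreover have "a*d \<ge> 1" using ad by simp
  ultimately show ?thesis using spow_add[of "a*d" "a*d" x] by (metis order.refl)
qed


lemma sindex_ex: assumes "finite (cyc x)"
  shows "sindex x > 0 \<and> (\<exists>t. t > 0 \<and> t \<noteq> sindex x \<and> spow x (sindex x) = spow x t)"
proof -
  obtain r t where "r > 0 \<and> (\<exists>t. t > 0 \<and> t \<noteq> r \<and> spow x r = spow x t)" using finite_cyc_ex[OF assms] by blast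
  then show ?thesis unfolding sindex_def by (rule LeastI)
qed

lemma sindex_min: assumes "0 < r" "r < sindex x" "t > 0" "t \<noteq> r" shows "spow x r \<noteq> spow x t"
  using not_less_Least[OF assms(2)[unfolded sindex_def]] assms(1,3,4) by blast

lemma sindex_gt: assumes "finite (cyc x)"
  shows "\<exists>t > sindex x. spow x t = spow x (sindex x)"
proof -
  obtain t where t: "t > 0" "t \<noteq> sindex x" "spow x (sindex x) = spow x t" using sindex_ex[OF assms] by blast
  have "\<not> t < sindex x" using sindex_min[of t x "sindex x"] t sindex_ex[OF assms] by auto
  then show ?thesis using t by (intro exI[of _ t]) auto
qed

lemma speriod_ex: assumes "finite (cyc x)"
  shows "speriod x > 0 \<and> spow x (sindex x + speriod x) = spow x (sindex x)"
proof -
  obtain t where t: "t > sindex x" "spow x t = spow x (sindex x)" using sindex_gt[OF assms] by blast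
  then have "t - sindex x > 0 \<and> spow x (sindex x + (t - sindex x)) = spow x (sindex x)" by simp
  then show ?thesis unfolding speriod_def by (rule LeastI)
qed

lemma speriod_min: assumes "0 < k" "k < speriod x" shows "spow x (sindex x + k) \<noteq> spow x (sindex x)"
  using not_less_Least[OF assms(2)[unfolded speriod_def]] assms(1) by blast

locale fc =
  fixes x :: "'a::semigroup_mult"
  assumes fin: "finite (cyc x)"
begin

abbreviation "I \<equiv> sindex x"
abbreviation "P \<equiv> speriod x"

lemma I_pos: "I \<ge> 1" using sindex_ex[OF fin] by simp
lemma P_pos: "P \<ge> 1" using speriod_ex[OF fin] by simp
lemma IP: "spow x I = spow x (I + P)" using speriod_ex[OF fin] by simp

lemma pmod: "n \<ge> I \<Longrightarrow> spow x n = spow x (I + (n - I) mod P)"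
  by (rule permod[OF I_pos IP]) (use P_pos in auto)

lemma pmul: "n \<ge> I \<Longrightarrow> spow x (n + m * P) = spow x n"
  by (rule perm[OF I_pos IP])

lemma distinct_pows: assumes "1 \<le> a" "a < b" "b < I + P" shows "spow x a \<noteq> spow x b"
proof
  assume eq: "spow x a = spow x b"
  have aI: "a \<ge> I" using sindex_min[of a x b] eq assms by force
  define d where "d = b - a"
  have d: "0 < d" "d < P" using assms aI unfolding d_def by auto
  define n where "n = (a - I) * (P - 1)"
  have an: "a + n = I + (a - I) * P"
  proof -
    obtain k where k: "a = I + k" using aI le_Suc_ex by blast
    obtain p where p: "P = Suc p" using P_pos not0_implies_Suc by fastforce
    show ?thesis unfolding n_def k p by (simp add: algebra_simps)
  qed
  have "spow x (a + n) = spow x (b + n)" using spow_shift[OF assms(1) _ eq] assms by simp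
  moreover have "spow x (a + n) = spow x I" using an pmul[of I "a - I"] by simp
  moreover have "spow x (b + n) = spow x (I + d)"
  proof -
    have "b + n = (I + d) + (a - I) * P" using an unfolding d_def using assms by simp
    then show ?thesis using pmul[of "I + d" "a - I"] by simp
  qed
  ultimately have "spow x (I + d) = spow x I" by simp
  then show False using speriod_min[OF d] by simp
qed

lemma cyc_eq: "cyc x = spow x ` {1..<I+P}"
proof
  show "cyc x \<subseteq> spow x ` {1..<I+P}" using cyc_sub[OF I_pos IP] P_pos by simp
  show "spow x ` {1..<I+P} \<subseteq> cyc x" unfolding cyc_def by auto
qed

lemma card_cyc: "card (cyc x) = I + P - 1"
proof -
  have "inj_on (spow x) {1..<I+P}"
  proof (rule inj_onI)
    fix a b assume ab: "a \<in> {1..<I+P}" "b \<in> {1..<I+P}" "spow x a = spow x b"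
    show "a = b"
    proof (rule ccontr)
      assume "a \<noteq> b"
      then consider "a < b" | "b < a" by linarith
      then show False using distinct_pows ab by (cases) (auto, metis)
    qed
  qed
  then have "card (spow x ` {1..<I+P}) = card {1..<I+P::nat}" by (rule card_image)
  then show ?thesis using cyc_eq by simp
qed

lemma idem_at: assumes "j \<ge> I" "P dvd j" shows "spow x j * spow x j = spow x j"
proof -
  obtain m where m: "j = P * m" using assms(2) by auto
  have "j \<ge> 1" using assms(1) I_pos by simp
  then have "spow x j * spow x j = spow x (j + m * P)" using m spow_add[of j j x] by (simp add: mult.commute)
  also have "\<dots> = spow x j" using pmul assms(1) by simp
  finally show ?thesis .
qed

lemma the_idem: "spow x (I * P) \<in> cyc x" "spow x (I * P) * spow x (I * P) = spow x (I * P)"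
proof -
  have "I * P \<ge> 1" using I_pos P_pos by (simp add: Suc_le_eq)
  then show "spow x (I * P) \<in> cyc x" using spow_in_cyc by blast
  show "spow x (I * P) * spow x (I * P) = spow x (I * P)"
    using idem_at[of "I*P"] P_pos by simp
qed

lemma card_nonidem: assumes "cyc x \<subseteq> S" shows "card (cyc x - Idem S) = I + P - 2"
proof -
  have "cyc x \<inter> Idem S = {spow x (I * P)}"
    using the_idem assms idem_unique unfolding Idem_def by blast
  then have "cyc x - Idem S = cyc x - {spow x (I * P)}" by blast
  then show ?thesis using card_cyc the_idem(1) fin by simp
qed

lemma nonidem_small: assumes "I mod P = 1 mod P" "1 \<le> k" "k \<le> I + P - 2"
  shows "spow x k * spow x k \<noteq> spow x k"
proof
  assume H: "spow x k * spow x k = spow x k"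
  have "P dvd (I - 1)" using assms(1) I_pos mod_eq_dvd_iff_nat by blast
  then have "P dvd (I - 1) + P" by simp
  then have "P dvd (I + P - 1)" using I_pos by (simp add: algebra_simps)
  then have "spow x (I + P - 1) * spow x (I + P - 1) = spow x (I + P - 1)" using idem_at P_pos by simp
  then have "spow x k = spow x (I + P - 1)"
    using idem_unique[of "spow x k" x "spow x (I + P - 1)"] spow_in_cyc[of k x] spow_in_cyc[of "I+P-1" x] H assms I_pos by simp
  moreover have "k < I + P - 1" using assms P_pos I_pos by linarith
  ultimately show False using distinct_pows[of k "I + P - 1"] assms P_pos I_pos by simp
qed

lemma mod_cond: assumes "\<And>k. 1 \<le> k \<Longrightarrow> k \<le> I + P - 2 \<Longrightarrow> spow x k * spow x k \<noteq> spow x k"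
  shows "I mod P = 1 mod P"
proof -
  define j where "j = ((I + P - 1) div P) * P"
  have j1: "j \<le> I + P - 1" unfolding j_def by simp
  have j2: "j \<ge> I"
  proof -
    have "(I + P - 1) mod P < P" using P_pos by simp
    then show ?thesis unfolding j_def using div_mult_mod_eq[of "I+P-1" P] I_pos by linarith
  qed
  have "spow x j * spow x j = spow x j" using idem_at[OF j2] unfolding j_def by simp
  then have "j = I + P - 1" using assms[of j] j1 j2 I_pos by fastforce
  moreover have "P dvd j" unfolding j_def by simp
  ultimately have "P dvd (I - 1) + P" using I_pos by (simp add: algebra_simps)
  then have "P dvd (I - 1)" by simp
  then show ?thesis using I_pos mod_eq_dvd_iff_nat by blast
qed

end

lemma mset_nths_sub: "mset (nths T I) \<subseteq># mset T"
proof (induction T arbitrary: I)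
  case Nil then show ?case by simp
next
  case (Cons a T)
  have "mset (nths T {j. Suc j \<in> I}) \<subseteq># mset T" by (rule Cons.IH)
  moreover have "\<And>A B. (A::'a multiset) \<subseteq># B \<Longrightarrow> A \<subseteq># add_mset a B"
    by (meson multi_psub_of_add_self subset_mset.le_less subset_mset.trans)
  ultimately show ?case by (auto simp: nths_Cons)
qed

lemma nths_nonempty: assumes "I \<noteq> {}" "I \<subseteq> {..<length T}" shows "nths T I \<noteq> []"
proof -
  obtain i where "i \<in> I" using assms by blast
  then have "T ! i \<in> set (nths T I)" using assms unfolding set_nths by blast
  then show ?thesis by auto
qed

lemma ex_nths: "mset U \<subseteq># mset T \<Longrightarrow> \<exists>I \<subseteq> {..<length T}. mset (nths T I) = mset U"
proof (induction T arbitrary: U)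
  case Nil then show ?case by simp
next
  case (Cons a T)
  show ?case
  proof (cases "a \<in># mset U")
    case True
    have "mset (remove1 a U) \<subseteq># mset T" using Cons.prems True
      by (metis insert_DiffM mset.simps(2) mset_remove1 mset_subset_eq_add_mset_cancel)
    then obtain J where J: "J \<subseteq> {..<length T}" "mset (nths T J) = mset (remove1 a U)" using Cons.IH by blast
    define I where "I = insert 0 (Suc ` J)"
    have "nths (a # T) I = a # nths T J" unfolding I_def by (simp add: nths_Cons image_iff)
    then have "mset (nths (a # T) I) = mset U" using J True by simp
    moreover have "I \<subseteq> {..<length (a # T)}" using J unfolding I_def by auto
    ultimately show ?thesis by blast
  next
    case False
    then have "mset U \<subseteq># mset T" using Cons.prems
      by (metis Diff_eq_empty_iff_mset minus_add_mset_if_not_in_lhs mset.simps(2))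
    then obtain J where J: "J \<subseteq> {..<length T}" "mset (nths T J) = mset U" using Cons.IH by blast
    define I where "I = Suc ` J"
    have "nths (a # T) I = nths T J" unfolding I_def by (simp add: nths_Cons image_iff)
    then show ?thesis using J unfolding I_def by (intro exI[of _ "Suc ` J"]) auto
  qed
qed


lemma sprod_move:
  assumes "\<forall>y\<in>set L1. a * y = y * a" "L1 @ L2 \<noteq> []"
  shows "sprod (L1 @ a # L2) = a * sprod (L1 @ L2)"
  using assms
proof (induction L1)
  case Nil then show ?case by (simp add: sprod_Cons)
next
  case (Cons b L1)
  show ?case
  proof (cases "L1 @ L2 = []")
    case True
    then show ?thesis using Cons.prems by simp
  next
    case False
    have "sprod ((b # L1) @ a # L2) = b * sprod (L1 @ a # L2)" by (simp add: sprod_Cons)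
    also have "\<dots> = b * (a * sprod (L1 @ L2))" using Cons False by simp
    also have "\<dots> = a * (b * sprod (L1 @ L2))" using Cons.prems
      by (simp add: mult.assoc[symmetric])
    also have "\<dots> = a * sprod ((b # L1) @ L2)" using False by (simp add: sprod_Cons)
    finally show ?thesis .
  qed
qed

lemma sprod_perm:
  assumes "commutative_on S" "set xs \<subseteq> S" "mset xs = mset ys" "xs \<noteq> []"
  shows "sprod xs = sprod ys"
  using assms(2-4)
proof (induction xs arbitrary: ys)
  case Nil then show ?case by simp
next
  case (Cons a xs)
  have "a \<in> set ys" using Cons.prems(2) by (metis list.set_intros(1) set_mset_mset)
  then obtain L1 L2 where ys: "ys = L1 @ a # L2" by (meson split_list)
  have m: "mset xs = mset (L1 @ L2)" using Cons.prems(2) ys by simp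
  have sy: "set ys \<subseteq> S" using Cons.prems(1,2) by (metis set_mset_mset)
  show ?case
  proof (cases "xs = []")
    case True
    then have "L1 @ L2 = []" using m by simp
    then show ?thesis using ys True by simp
  next
    case False
    then have ne: "L1 @ L2 \<noteq> []" using m by auto
    have com: "\<forall>y\<in>set L1. a * y = y * a" using assms(1) sy ys Cons.prems(1) unfolding commutative_on_def by auto
    have "sprod (a # xs) = a * sprod xs" using False by (simp add: sprod_Cons)
    also have "\<dots> = a * sprod (L1 @ L2)" using Cons.IH[OF _ m False] Cons.prems(1) by simp
    also have "\<dots> = sprod ys" using sprod_move[OF com ne] ys by simp
    finally show ?thesis .
  qed
qed

lemma weak_sub: "weak_ipf S T \<Longrightarrow> mset V \<subseteq># mset T \<Longrightarrow> weak_ipf S V"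
  unfolding weak_ipf_def using subset_mset.order_trans by blast

lemma weak_strong: "weak_ipf S T \<Longrightarrow> strong_ipf S T"
  unfolding weak_ipf_def strong_ipf_def using mset_nths_sub nths_nonempty by blast

lemma strong_weak:
  assumes "commutative_on S" "set T \<subseteq> S" "strong_ipf S T" shows "weak_ipf S T"
  unfolding weak_ipf_def
proof (intro allI impI)
  fix U assume U: "U \<noteq> []" "mset U \<subseteq># mset T"
  obtain I where I: "I \<subseteq> {..<length T}" "mset (nths T I) = mset U" using ex_nths[OF U(2)] by blast
  have "I \<noteq> {}" using I U(1) by auto
  then have "sprod (nths T I) \<notin> Idem S" using assms(3) I(1) unfolding strong_ipf_def by blast
  moreover have "set (nths T I) \<subseteq> S" using assms(2) set_nths_subset by fastforce
  moreover have "nths T I \<noteq> []" using nths_nonempty[OF \<open>I \<noteq> {}\<close> I(1)] .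
  ultimately show "sprod U \<notin> Idem S" using sprod_perm[OF assms(1) _ I(2)] by metis
qed

lemma set_sub_of_mset: "mset U \<subseteq># mset T \<Longrightarrow> set U \<subseteq> set T"
  by (metis set_mset_mono set_mset_mset)


definition PiS :: "'a::semigroup_mult list \<Rightarrow> 'a set" where
  "PiS T = {sprod U | U. U \<noteq> [] \<and> mset U \<subseteq># mset T}"

lemma Pi_sub_N:
  assumes "set T \<subseteq> S" "\<forall>a\<in>S. \<forall>b\<in>S. a * b \<in> S" "weak_ipf S T"
  shows "PiS T \<subseteq> S - Idem S"
proof
  fix y assume "y \<in> PiS T"
  then obtain U where U: "y = sprod U" "U \<noteq> []" "mset U \<subseteq># mset T" unfolding PiS_def by blast
  then have "set U \<subseteq> S" using assms(1) set_sub_of_mset by blast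
  then have "y \<in> S" using sprod_in U assms(2) by blast
  moreover have "y \<notin> Idem S" using assms(3) U unfolding weak_ipf_def by blast
  ultimately show "y \<in> S - Idem S" by blast
qed

lemma Pi_mono: "mset V \<subseteq># mset W \<Longrightarrow> PiS V \<subseteq> PiS W"
  unfolding PiS_def using subset_mset.order_trans by blast

lemma Pi_mset: "mset V = mset W \<Longrightarrow> PiS V = PiS W"
  unfolding PiS_def by simp

lemma in_Pi: "U \<noteq> [] \<Longrightarrow> mset U \<subseteq># mset T \<Longrightarrow> sprod U \<in> PiS T"
  unfolding PiS_def by blast

lemma Pi_Nil: "PiS [] = {}" unfolding PiS_def by auto

lemma sub_Cons: "mset T \<subseteq># mset (x # T)" by simp

lemma Pi_step:
  assumes "set (x # T) \<subseteq> S" "\<forall>a\<in>S. \<forall>b\<in>S. a * b \<in> S" "weak_ipf S (x # T)" "finite (S - Idem S)"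
  shows "PiS T \<subset> PiS (x # T)"
proof -
  have sub: "PiS T \<subseteq> PiS (x # T)" by (rule Pi_mono[OF sub_Cons])
  have N: "PiS (x # T) \<subseteq> S - Idem S" by (rule Pi_sub_N[OF assms(1-3)])
  show ?thesis
  proof (rule ccontr)
    assume "\<not> ?thesis"
    then have eq: "PiS T = PiS (x # T)" using sub by auto
    have pw: "spow x n \<in> PiS (x # T)" if "n \<ge> 1" for n
      using that
    proof (induction n rule: nat_induct_at_least)
      case base
      have "sprod [x] \<in> PiS (x # T)" by (rule in_Pi) auto
      then show ?case by simp
    next
      case (Suc n)
      have "spow x n \<in> PiS T" using Suc.IH eq by simp
      then obtain U where U: "spow x n = sprod U" "U \<noteq> []" "mset U \<subseteq># mset T"
        unfolding PiS_def by blast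
      have "mset (U @ [x]) \<subseteq># mset (x # T)" using U(3) by simp
      then have "sprod (U @ [x]) \<in> PiS (x # T)" by (intro in_Pi) auto
      moreover have "sprod (U @ [x]) = spow x (Suc n)" using U Suc.hyps by (simp add: sprod_snoc spow_Suc')
      ultimately show ?case by simp
    qed
    have "cyc x \<subseteq> PiS (x # T)"
    proof
      fix y assume "y \<in> cyc x"
      then obtain n where "y = spow x n" "n \<ge> 1" unfolding cyc_def by auto
      then show "y \<in> PiS (x # T)" using pw by simp
    qed
    then have "finite (cyc x)" using N assms(4) by (meson finite_Diff2 finite_subset)
    then obtain j where j: "j \<ge> 1" "spow x j * spow x j = spow x j" using idem_pow_ex by auto
    have "x \<in> S" using assms(1) by simp
    then have "spow x j \<in> S" by (rule spow_in[OF j(1) _ assms(2)])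
    then have "spow x j \<in> Idem S" using j unfolding Idem_def by simp
    moreover have "spow x j \<in> S - Idem S" using pw[OF j(1)] N by auto
    ultimately show False by auto
  qed
qed

lemma Pi_card:
  assumes "set (L @ V) \<subseteq> S" "\<forall>a\<in>S. \<forall>b\<in>S. a * b \<in> S" "weak_ipf S (L @ V)" "finite (S - Idem S)"
  shows "card (PiS V) + length L \<le> card (PiS (L @ V))"
  using assms(1,3)
proof (induction L)
  case Nil then show ?case by simp
next
  case (Cons a L)
  have w: "weak_ipf S (L @ V)" using weak_sub[OF Cons.prems(2)] by simp
  have "PiS (L @ V) \<subset> PiS (a # L @ V)" using Pi_step[of a "L @ V" S] Cons.prems assms(2,4) by simp
  moreover have "finite (PiS (a # L @ V))" using Pi_sub_N[of "a # L @ V" S] Cons.prems assms(2,4) finite_subset by auto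
  ultimately have "card (PiS (L @ V)) < card (PiS (a # L @ V))" by (rule psubset_card_mono[rotated])
  then show ?case using Cons.IH w Cons.prems(1) by simp
qed

lemma weak_len:
  assumes "set T \<subseteq> S" "\<forall>a\<in>S. \<forall>b\<in>S. a * b \<in> S" "weak_ipf S T" "finite (S - Idem S)"
  shows "length T \<le> card (S - Idem S)"
proof -
  have "length T \<le> card (PiS T)" using Pi_card[of T "[]" S] assms by (simp add: Pi_Nil)
  moreover have "card (PiS T) \<le> card (S - Idem S)" using Pi_sub_N[OF assms(1-3)] assms(4) card_mono by blast
  ultimately show ?thesis by simp
qed

lemma Pi_full:
  assumes "set T \<subseteq> S" "\<forall>a\<in>S. \<forall>b\<in>S. a * b \<in> S" "weak_ipf S T" "finite (S - Idem S)"
    "length T = card (S - Idem S)"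
  shows "PiS T = S - Idem S"
proof -
  have "length T \<le> card (PiS T)" using Pi_card[of T "[]" S] assms by (simp add: Pi_Nil)
  then have "card (S - Idem S) \<le> card (PiS T)" using assms(5) by simp
  then show ?thesis using Pi_sub_N[OF assms(1-3)] assms(4) by (simp add: card_seteq)
qed

lemma Pi_rigid:
  assumes "set T \<subseteq> S" "\<forall>a\<in>S. \<forall>b\<in>S. a * b \<in> S" "weak_ipf S T" "finite (S - Idem S)"
    "length T = card (S - Idem S)" "mset V \<subseteq># mset T"
  shows "card (PiS V) \<le> length V"
proof -
  obtain L where L: "mset L = mset T - mset V" using ex_mset by blast
  have m: "mset (L @ V) = mset T" using L assms(6) by simp
  then have st: "set (L @ V) \<subseteq> S" using assms(1) by (metis set_mset_mset)
  have w: "weak_ipf S (L @ V)" using weak_sub[OF assms(3)] m by simp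
  have "card (PiS V) + length L \<le> card (PiS (L @ V))" using Pi_card[OF st assms(2) w assms(4)] .
  moreover have "PiS (L @ V) = PiS T" using Pi_mset[OF m] .
  moreover have "card (PiS T) \<le> card (S - Idem S)" using Pi_sub_N[OF assms(1-3)] assms(4) card_mono by blast
  moreover have "length L + length V = length T" using m by (metis length_append size_mset)
  ultimately show ?thesis using assms(5) by simp
qed


lemma mset_take_sub: "mset (take n xs) \<subseteq># mset xs"
  by (metis append_take_drop_id mset_append mset_subset_eq_add_left)

lemma EB_I_le:
  assumes "\<forall>a\<in>S. \<forall>b\<in>S. a * b \<in> S" "finite (S - Idem S)"
  shows "EB_I S \<le> enat (card (S - Idem S) + 1)"
proof -
  have "enat (card (S - Idem S) + 1) \<in> {enat l | l. \<forall>T. set T \<subseteq> S \<and> length T = l \<longrightarrow> \<not> weak_ipf S T}"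
    using weak_len[OF _ assms(1) _ assms(2)] by fastforce
  then show ?thesis unfolding EB_I_def by (rule Inf_lower)
qed

lemma EB_I_eq_iff:
  assumes "\<forall>a\<in>S. \<forall>b\<in>S. a * b \<in> S" "finite (S - Idem S)"
  shows "EB_I S = enat (card (S - Idem S) + 1) \<longleftrightarrow>
         (\<exists>T. set T \<subseteq> S \<and> length T = card (S - Idem S) \<and> weak_ipf S T)"
proof
  assume H: "EB_I S = enat (card (S - Idem S) + 1)"
  show "\<exists>T. set T \<subseteq> S \<and> length T = card (S - Idem S) \<and> weak_ipf S T"
  proof (rule ccontr)
    assume "\<not> ?thesis"
    then have "enat (card (S - Idem S)) \<in> {enat l | l. \<forall>T. set T \<subseteq> S \<and> length T = l \<longrightarrow> \<not> weak_ipf S T}"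
      by blast
    then have "EB_I S \<le> enat (card (S - Idem S))" unfolding EB_I_def by (rule Inf_lower)
    then show False using H by simp
  qed
next
  assume "\<exists>T. set T \<subseteq> S \<and> length T = card (S - Idem S) \<and> weak_ipf S T"
  then obtain T where T: "set T \<subseteq> S" "length T = card (S - Idem S)" "weak_ipf S T" by blast
  have "enat (card (S - Idem S) + 1) \<le> EB_I S" unfolding EB_I_def
  proof (rule Inf_greatest)
    fix y assume "y \<in> {enat l | l. \<forall>T. set T \<subseteq> S \<and> length T = l \<longrightarrow> \<not> weak_ipf S T}"
    then obtain l where l: "y = enat l" "\<forall>T. set T \<subseteq> S \<and> length T = l \<longrightarrow> \<not> weak_ipf S T" by blast
    show "enat (card (S - Idem S) + 1) \<le> y"
    proof (rule ccontr)
      assume "\<not> ?thesis"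
      then have "l \<le> length T" using l(1) T(2) by simp
      then have "set (take l T) \<subseteq> S" "length (take l T) = l" using T(1) set_take_subset by (auto, fastforce)
      moreover have "weak_ipf S (take l T)" using weak_sub[OF T(3) mset_take_sub] .
      ultimately show False using l(2) by blast
    qed
  qed
  then show "EB_I S = enat (card (S - Idem S) + 1)" using EB_I_le[OF assms] by simp
qed

lemma EB_I_le_SI: "EB_I S \<le> EB_SI S"
  unfolding EB_I_def EB_SI_def
proof (rule Inf_superset_mono)
  show "{enat l |l. \<forall>T. set T \<subseteq> S \<and> length T = l \<longrightarrow> \<not> strong_ipf S T}
    \<subseteq> {enat l |l. \<forall>T. set T \<subseteq> S \<and> length T = l \<longrightarrow> \<not> weak_ipf S T}"
    using weak_strong by blast
qed

lemma EB_I_eq_SI: assumes "commutative_on S" shows "EB_I S = EB_SI S"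
proof -
  have "\<And>T. set T \<subseteq> S \<Longrightarrow> weak_ipf S T \<longleftrightarrow> strong_ipf S T"
    using weak_strong strong_weak[OF assms] by blast
  then have "{enat l |l. \<forall>T. set T \<subseteq> S \<and> length T = l \<longrightarrow> \<not> strong_ipf S T}
    = {enat l |l. \<forall>T. set T \<subseteq> S \<and> length T = l \<longrightarrow> \<not> weak_ipf S T}" by metis
  then show ?thesis unfolding EB_I_def EB_SI_def by simp
qed

lemma part1:
  assumes "EB_I S \<noteq> \<infinity> \<or> EB_SI S \<noteq> \<infinity>" "x \<in> S"
  shows "finite (cyc x)"
proof (rule ccontr)
  assume inf: "\<not> finite (cyc x)"
  have "EB_I S \<noteq> \<infinity>" using assms(1) EB_I_le_SI[of S] by (metis enat_ord_simps(5) top.extremum_uniqueI top_enat_def)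
  then have "{enat l | l. \<forall>T. set T \<subseteq> S \<and> length T = l \<longrightarrow> \<not> weak_ipf S T} \<noteq> {}"
    unfolding EB_I_def by (metis Inf_empty top_enat_def)
  then obtain l where l: "\<forall>T. set T \<subseteq> S \<and> length T = l \<longrightarrow> \<not> weak_ipf S T" by blast
  have "weak_ipf S (replicate l x)" unfolding weak_ipf_def
  proof (intro allI impI)
    fix U assume U: "U \<noteq> []" "mset U \<subseteq># mset (replicate l x)"
    then have "set U \<subseteq> {x}" using set_sub_of_mset by fastforce
    then have "U = replicate (length U) x" by (metis replicate_length_same singletonD subsetD)
    then have sU: "sprod U = spow x (length U)" using sprod_replicate U(1) by (metis length_greater_0_conv less_eq_Suc_le One_nat_def)
    show "sprod U \<notin> Idem S"
    proof
      assume "sprod U \<in> Idem S"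
      then have "spow x (length U) * spow x (length U) = spow x (length U)" using sU unfolding Idem_def by simp
      then have "spow x (length U + length U) = spow x (length U)" using spow_add U(1)
        by (metis length_greater_0_conv less_eq_Suc_le One_nat_def)
      then have "finite (cyc x)" using finite_cyc_if[of "length U + length U" "length U" x] U(1) by simp
      then show False using inf by simp
    qed
  qed
  moreover have "set (replicate l x) \<subseteq> S" using assms(2) by (auto simp: set_replicate_conv_if)
  ultimately show False using l by simp
qed


lemma length_sum_count: "finite A \<Longrightarrow> set xs \<subseteq> A \<Longrightarrow> (\<Sum>y\<in>A. count_list xs y) = length xs"
proof (induction xs)
  case Nil then show ?case by simp
next
  case (Cons a xs)
  have "(\<Sum>y\<in>A. count_list (a # xs) y) = (\<Sum>y\<in>A. count_list xs y + (if a = y then 1 else 0))"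
    by (rule sum.cong) auto
  also have "\<dots> = (\<Sum>y\<in>A. count_list xs y) + (\<Sum>y\<in>A. (if a = y then 1 else 0))" by (rule sum.distrib)
  also have "\<dots> = length xs + 1" using Cons by simp
  finally show ?case by simp
qed

lemma spow_ge1: "n \<ge> 1 \<Longrightarrow> spow x n \<in> cyc x" by (rule spow_in_cyc)

locale chn =
  fixes s :: "'a::semigroup_mult set"
  assumes comm: "\<And>x y. x \<in> s \<Longrightarrow> y \<in> s \<Longrightarrow> x * y = y * x"
    and absb: "\<And>x y. x \<in> s \<Longrightarrow> y \<in> s \<Longrightarrow> x \<noteq> y \<Longrightarrow> x * y = x \<or> x * y = y"
    and nidem: "\<And>x. x \<in> s \<Longrightarrow> x * x \<noteq> x"
begin

definition lt (infix \<open>\<sqsubset>\<close> 50) where "x \<sqsubset> y \<longleftrightarrow> x \<in> s \<and> y \<in> s \<and> x \<noteq> y \<and> x * y = x"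

lemma lt_total: "x \<in> s \<Longrightarrow> y \<in> s \<Longrightarrow> x \<noteq> y \<Longrightarrow> x \<sqsubset> y \<or> y \<sqsubset> x"
  unfolding lt_def using absb comm by metis

lemma lt_asym: "x \<sqsubset> y \<Longrightarrow> \<not> y \<sqsubset> x"
  unfolding lt_def using comm by metis

lemma lt_trans: assumes "x \<sqsubset> y" "y \<sqsubset> z" shows "x \<sqsubset> z"
proof -
  have xyz: "x \<in> s" "y \<in> s" "z \<in> s" "x * y = x" "y * z = y" "x \<noteq> y" "y \<noteq> z" using assms unfolding lt_def by auto
  have "x * z = x" using xyz by (metis mult.assoc)
  moreover have "x \<noteq> z" using xyz comm by metis
  ultimately show ?thesis using xyz unfolding lt_def by simp
qed

lemma pow_right: assumes "x \<sqsubset> y" "a \<ge> 1" shows "spow x a * y = spow x a"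
  using assms(2)
proof (induction a rule: nat_induct_at_least)
  case base then show ?case using assms(1) unfolding lt_def by simp
next
  case (Suc a)
  then show ?case using spow_Suc[of a x] by (simp add: mult.assoc)
qed

lemma pow_left: assumes "x \<sqsubset> y" "a \<ge> 1" shows "y * spow x a = spow x a"
  using assms(2)
proof (induction a rule: nat_induct_at_least)
  case base then show ?case using assms(1) comm unfolding lt_def by simp
next
  case (Suc a)
  have "y * x = x" using assms(1) comm unfolding lt_def by metis
  then show ?case using spow_Suc'[of a x] Suc by (simp add: mult.assoc[symmetric])
qed

lemma F1: assumes "x \<sqsubset> y" "a \<ge> 1" "b \<ge> 1"
  shows "spow x a * spow y b = spow x a" "spow y b * spow x a = spow x a"
proof -
  show "spow x a * spow y b = spow x a" using assms(3)
  proof (induction b rule: nat_induct_at_least)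
    case base then show ?case using pow_right[OF assms(1,2)] by simp
  next
    case (Suc b)
    have "spow x a * spow y (Suc b) = (spow x a * spow y b) * y" using spow_Suc'[of b y] Suc(1) by (metis mult.assoc)
    then show ?case using Suc pow_right[OF assms(1,2)] by simp
  qed
  show "spow y b * spow x a = spow x a" using assms(3)
  proof (induction b rule: nat_induct_at_least)
    case base then show ?case using pow_left[OF assms(1,2)] by simp
  next
    case (Suc b)
    have "spow y (Suc b) * spow x a = y * (spow y b * spow x a)" using spow_Suc[of b y] Suc by (simp add: mult.assoc)
    then show ?case using Suc pow_left[OF assms(1,2)] by simp
  qed
qed

lemma F1c: assumes "x \<sqsubset> y" "u \<in> cyc x" "w \<in> cyc y"
  shows "u * w = u" "w * u = u"
proof -
  obtain a b where "u = spow x a" "a \<ge> 1" "w = spow y b" "b \<ge> 1" using assms(2,3) unfolding cyc_def by auto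
  then show "u * w = u" "w * u = u" using F1[OF assms(1)] by auto
qed

lemma cyc_comm: assumes "u \<in> cyc x" "w \<in> cyc x" shows "u * w = w * u"
proof -
  obtain a b where "u = spow x a" "a \<ge> 1" "w = spow x b" "b \<ge> 1" using assms unfolding cyc_def by auto
  then show ?thesis using spow_add[of a b x] spow_add[of b a x] by (simp add: add.commute)
qed

lemma pow_comm: assumes "x \<in> s" "y \<in> s" "u \<in> cyc x" "w \<in> cyc y" shows "u * w = w * u"
proof (cases "x = y")
  case True then show ?thesis using cyc_comm assms by simp
next
  case False
  then consider "x \<sqsubset> y" | "y \<sqsubset> x" using lt_total assms by blast
  then show ?thesis using F1c assms by cases metis+
qed

lemma prod_lemma:
  "U \<noteq> [] \<Longrightarrow> set U \<subseteq> s \<Longrightarrow>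
   \<exists>x\<in>set U. sprod U = spow x (count_list U x) \<and> (\<forall>y\<in>set U. y \<noteq> x \<longrightarrow> x \<sqsubset> y)"
proof (induction U)
  case Nil then show ?case by simp
next
  case (Cons u U)
  show ?case
  proof (cases "U = []")
    case True then show ?thesis by simp
  next
    case False
    then obtain x where x: "x \<in> set U" "sprod U = spow x (count_list U x)" "\<forall>y\<in>set U. y \<noteq> x \<longrightarrow> x \<sqsubset> y"
      using Cons by auto
    have c1: "count_list U x \<ge> 1" using x(1) count_list_0_iff by (metis less_one not_le)
    have us: "u \<in> s" "x \<in> s" using Cons.prems x(1) by auto
    have su: "sprod (u # U) = u * spow x (count_list U x)" using False x(2) by (simp add: sprod_Cons)
    show ?thesis
    proof (cases "u = x")
      case True
      then have "sprod (u # U) = spow x (count_list (u # U) x)" using su c1 spow_Suc[of "count_list U x" x] by simp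
      then show ?thesis using True x(3) by auto
    next
      case False
      then consider "x \<sqsubset> u" | "u \<sqsubset> x" using lt_total us by blast
      then show ?thesis
      proof cases
        case 1
        then have "sprod (u # U) = spow x (count_list (u # U) x)" using su pow_left[OF 1 c1] False by simp
        then show ?thesis using x 1 by auto
      next
        case 2
        have nu: "u \<notin> set U" using x(3) 2 lt_asym \<open>u \<noteq> x\<close> by blast
        have "sprod (u # U) = u" using su pow_right c1 F1[OF 2 order.refl c1] by simp
        moreover have "count_list (u # U) u = 1" using nu by simp
        moreover have "\<forall>y\<in>set (u # U). y \<noteq> u \<longrightarrow> u \<sqsubset> y"
          using x(3) 2 lt_trans by auto
        ultimately show ?thesis by auto
      qed
    qed
  qed
qed

lemma gen_eq: "gen s = (\<Union>x\<in>s. cyc x)"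
proof
  show "gen s \<subseteq> (\<Union>x\<in>s. cyc x)"
  proof
    fix r assume "r \<in> gen s"
    then obtain U where U: "r = sprod U" "U \<noteq> []" "set U \<subseteq> s" unfolding gen_def by blast
    then obtain x where "x \<in> set U" "r = spow x (count_list U x)" using prod_lemma by blast
    moreover have "count_list U x \<ge> 1" using \<open>x \<in> set U\<close> count_list_0_iff by (metis less_one not_le)
    ultimately show "r \<in> (\<Union>x\<in>s. cyc x)" using U(3) spow_in_cyc by blast
  qed
  show "(\<Union>x\<in>s. cyc x) \<subseteq> gen s"
  proof
    fix r assume "r \<in> (\<Union>x\<in>s. cyc x)"
    then obtain x n where "x \<in> s" "n \<ge> 1" "r = spow x n" unfolding cyc_def by blast
    then have "r = sprod (replicate n x)" "replicate n x \<noteq> []" "set (replicate n x) \<subseteq> s"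
      using sprod_replicate[of n x] by auto
    then show "r \<in> gen s" unfolding gen_def by blast
  qed
qed

lemma gen_comm: "commutative_on (gen s)"
  unfolding commutative_on_def gen_eq using pow_comm by blast

end

context chn
begin

abbreviation "R \<equiv> gen s"

lemma in_R: "x \<in> s \<Longrightarrow> u \<in> cyc x \<Longrightarrow> u \<in> R"
  using gen_eq by blast

lemma R_cases: "r \<in> R \<Longrightarrow> \<exists>x\<in>s. r \<in> cyc x"
  using gen_eq by blast

lemma F2: assumes "x \<sqsubset> y" "u \<in> cyc x" "w \<in> cyc y" shows "leqN R u w"
proof -
  have "spow u 1 = w * u" using F1c[OF assms] by simp
  moreover have "u \<in> R" using in_R assms lt_def by blast
  ultimately show ?thesis unfolding leqN_def by (intro exI[of _ 1]) auto
qed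

lemma F3: assumes "x \<in> s" "u \<in> cyc x" "w \<in> cyc x" shows "leqN R u w"
proof -
  obtain a b where ab: "u = spow x a" "a \<ge> 1" "w = spow x b" "b \<ge> 1" using assms(2,3) unfolding cyc_def by auto
  have "spow u (b + 1) = spow x (a * (b + 1))" using ab spow_mult[of "b+1" a x] by simp
  moreover have ge: "a * (b + 1) \<ge> b + 1"
  proof -
    obtain a' where "a = Suc a'" using ab(2) by (cases a) auto
    then show ?thesis by simp
  qed
  then have "a * (b + 1) = b + (a * (b + 1) - b)" "a * (b + 1) - b \<ge> 1" by linarith+
  ultimately have "spow u (b + 1) = w * spow x (a * (b + 1) - b)" using ab spow_add[of b "a * (b + 1) - b" x] by simp
  moreover have "spow x (a * (b + 1) - b) \<in> R" using in_R[OF assms(1)] spow_in_cyc \<open>a * (b + 1) - b \<ge> 1\<close> by blast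
  ultimately show ?thesis unfolding leqN_def by (intro exI[of _ "b+1"]) auto
qed

lemma Ychain: "Y_chain R"
  unfolding Y_chain_def
proof (intro ballI)
  fix u w assume "u \<in> R" "w \<in> R"
  then obtain x y where xy: "x \<in> s" "y \<in> s" "u \<in> cyc x" "w \<in> cyc y" using R_cases by blast
  show "leqN R u w \<or> leqN R w u"
  proof (cases "x = y")
    case True then show ?thesis using F3 xy by blast
  next
    case False
    then consider "x \<sqsubset> y" | "y \<sqsubset> x" using lt_total xy by blast
    then show ?thesis using F2 xy by cases blast+
  qed
qed

lemma F4: assumes "u \<in> R" "w \<in> R" "lneqN R u w" shows "u * w = u"
proof -
  obtain x y where xy: "x \<in> s" "y \<in> s" "u \<in> cyc x" "w \<in> cyc y" using R_cases assms by blast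
  have nl: "\<not> leqN R w u" using assms(3) unfolding lneqN_def by simp
  have "x \<noteq> y" using F3 xy nl by blast
  moreover have "\<not> y \<sqsubset> x" using F2 xy nl by blast
  ultimately have "x \<sqsubset> y" using lt_total xy by blast
  then show ?thesis using F1c xy by blast
qed

lemma F5a: assumes "x \<sqsubset> y" "z \<in> cyc x" "z \<in> cyc y" shows "z * z = z"
proof -
  obtain b where b: "z = spow y b" "b \<ge> 1" using assms(3) unfolding cyc_def by auto
  have "z * y = z" using F1c(1)[OF assms(1) assms(2) x_in_cyc] .
  moreover have "spow y (b + 1) = z * y" using b spow_Suc'[of b y] by simp
  ultimately have "spow y b = spow y (b + 1)" using b by simp
  then have "spow y (b + b * 1) = spow y b" using perm[of b y 1 b b] b by simp
  then show ?thesis using b spow_add[of b b y] by simp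
qed

lemma F5: assumes "x \<in> s" "y \<in> s" "x \<noteq> y" "z \<in> cyc x" "z \<in> cyc y" shows "z * z = z"
  using lt_total[OF assms(1-3)] F5a assms by blast

lemma F6: assumes "p \<sqsubset> q" "q \<sqsubset> r" "z \<in> cyc p" "z \<in> cyc r" shows False
proof -
  have "q * z = z" using F1c(2)[OF assms(1) assms(3) x_in_cyc] .
  moreover have "q * z = q" using F1c(1)[OF assms(2) x_in_cyc assms(4)] .
  moreover have "z * z = z" using F5a[OF lt_trans[OF assms(1,2)] assms(3,4)] .
  ultimately show False using nidem assms(1) unfolding lt_def by metis
qed

lemma F7: assumes "x \<sqsubset> y" "u \<in> cyc x" "w \<in> cyc y" "leqN R w u"
  shows "\<exists>z. z \<in> cyc x \<and> z \<in> cyc y"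
proof -
  obtain m c where mc: "m > 0" "c \<in> R" "spow w m = u * c" using assms(4) unfolding leqN_def by blast
  obtain k where k: "k \<in> s" "c \<in> cyc k" using R_cases mc(2) by blast
  have wy: "spow w m \<in> cyc y" using cyc_pow[OF assms(3), of m] mc(1) by simp
  have xs: "x \<in> s" using assms(1) lt_def by simp
  consider "k = x" | "x \<sqsubset> k" | "k \<sqsubset> x" using lt_total k(1) xs by blast
  then show ?thesis
  proof cases
    case 1
    then have "u * c \<in> cyc x" using cyc_mult assms(2) k by simp
    then show ?thesis using wy mc(3) by auto
  next
    case 2
    then have "u * c = u" using F1c assms(2) k by blast
    then show ?thesis using wy mc(3) assms(2) by auto
  next
    case 3
    then have "u * c = c" using F1c(2)[OF 3 k(2) assms(2)] by simp
    then have "spow w m \<in> cyc k" using mc(3) k by simp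
    then show ?thesis using F6[OF 3 assms(1)] wy by blast
  qed
qed

lemma F8: assumes "x \<in> s" "y \<in> s" "x \<noteq> y" "z \<in> cyc x" "z \<in> cyc y" "u \<in> cyc x" "w \<in> cyc y"
  shows "leqN R w u"
proof -
  have zz: "z * z = z" using F5 assms by blast
  obtain i j where ij: "z = spow y i" "i \<ge> 1" "w = spow y j" "j \<ge> 1" using assms(5,7) unfolding cyc_def by auto
  obtain i' j' where ij': "z = spow x i'" "i' \<ge> 1" "u = spow x j'" "j' \<ge> 1" using assms(4,6) unfolding cyc_def by auto
  have "spow w i = spow y (j * i)" using ij spow_mult[of i j y] by simp
  also have "\<dots> = spow z j" using ij spow_mult[of j i y] by (simp add: mult.commute)
  also have "\<dots> = z" using spow_idem ij zz by simp
  finally have wz: "spow w i = z" .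
  have "spow u (i' * 2) = spow (spow u i') 2" using spow_mult[of 2 i' u] ij' by simp
  moreover have "spow u i' = z"
  proof -
    have "spow u i' = spow x (j' * i')" using ij' spow_mult[of i' j' x] by simp
    also have "\<dots> = spow z j'" using ij' spow_mult[of j' i' x] by (simp add: mult.commute)
    also have "\<dots> = z" using spow_idem ij' zz by simp
    finally show ?thesis .
  qed
  ultimately have "spow u (i' * 2) = z" using zz by (simp add: numeral_2_eq_2)
  moreover have "spow u (i' * 2) = u * spow u (i' * 2 - 1)"
    using spow_Suc[of "i' * 2 - 1" u] ij'(2) by simp
  ultimately have "z = u * spow u (i' * 2 - 1)" by simp
  moreover have "spow u (i' * 2 - 1) \<in> R" using in_R[OF assms(1)] cyc_pow[OF assms(6), of "i' * 2 - 1"] ij'(2) by simp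
  ultimately show ?thesis unfolding leqN_def using wz ij(2) by (intro exI[of _ i]) auto
qed

lemma relN_iff: assumes "x \<in> s" "y \<in> s" "u \<in> cyc x" "w \<in> cyc y"
  shows "relN R u w \<longleftrightarrow> x = y \<or> (\<exists>z. z \<in> cyc x \<and> z \<in> cyc y)"
proof
  assume r: "relN R u w"
  show "x = y \<or> (\<exists>z. z \<in> cyc x \<and> z \<in> cyc y)"
  proof (cases "x = y")
    case False
    then consider "x \<sqsubset> y" | "y \<sqsubset> x" using lt_total assms by blast
    then show ?thesis
    proof cases
      case 1 then show ?thesis using F7[OF 1 assms(3,4)] r unfolding relN_def by blast
    next
      case 2 then show ?thesis using F7[OF 2 assms(4,3)] r unfolding relN_def by blast
    qed
  qed simp
next
  assume "x = y \<or> (\<exists>z. z \<in> cyc x \<and> z \<in> cyc y)"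
  then show "relN R u w"
  proof
    assume "x = y" then show ?thesis using F3 assms unfolding relN_def by simp
  next
    assume "\<exists>z. z \<in> cyc x \<and> z \<in> cyc y"
    then obtain z where z: "z \<in> cyc x" "z \<in> cyc y" by blast
    show ?thesis
    proof (cases "x = y")
      case True then show ?thesis using F3 assms unfolding relN_def by simp
    next
      case False
      then show ?thesis unfolding relN_def
        using F8[OF assms(1,2) False z assms(3,4)] F8[OF assms(2,1) _ z(2,1) assms(4,3)] False by auto
    qed
  qed
qed

lemma F9: assumes "x \<in> s" "y \<in> s" "z \<in> s" "x \<noteq> y" "x \<noteq> z" "y \<noteq> z"
  "e1 \<in> cyc x" "e1 \<in> cyc y" "e2 \<in> cyc x" "e2 \<in> cyc z"
  shows False
proof -
  have "e1 * e1 = e1" "e2 * e2 = e2" using F5 assms by blast+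
  then have "e1 = e2" using idem_unique assms(7,9) by blast
  then have e: "e1 \<in> cyc x" "e1 \<in> cyc y" "e1 \<in> cyc z" using assms by auto
  have F6': "\<And>p q r. p \<in> {x,y,z} \<Longrightarrow> r \<in> {x,y,z} \<Longrightarrow> p \<sqsubset> q \<Longrightarrow> q \<sqsubset> r \<Longrightarrow> False"
    using F6 e by blast
  have "x \<sqsubset> y \<or> y \<sqsubset> x" "x \<sqsubset> z \<or> z \<sqsubset> x" "y \<sqsubset> z \<or> z \<sqsubset> y" using lt_total assms by blast+
  then show False using F6' by blast
qed

end

context chn
begin

lemma relN_refl: "r \<in> R \<Longrightarrow> relN R r r"
  using R_cases F3 unfolding relN_def by blast

lemma comp_struct: assumes "a \<in> R"
  shows "(\<exists>x\<in>s. {b \<in> R. relN R a b} = cyc x \<and> \<not> (\<exists>y\<in>s. y \<noteq> x \<and> (\<exists>z. z \<in> cyc x \<and> z \<in> cyc y)))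
       \<or> (\<exists>p q. p \<sqsubset> q \<and> (\<exists>z. z \<in> cyc p \<and> z \<in> cyc q) \<and> {b \<in> R. relN R a b} = cyc p \<union> cyc q)"
proof -
  obtain x0 where x0: "x0 \<in> s" "a \<in> cyc x0" using R_cases assms by blast
  show ?thesis
  proof (cases "\<exists>y\<in>s. y \<noteq> x0 \<and> (\<exists>z. z \<in> cyc x0 \<and> z \<in> cyc y)")
    case False
    have "{b \<in> R. relN R a b} = cyc x0"
    proof
      show "{b \<in> R. relN R a b} \<subseteq> cyc x0"
      proof
        fix b assume b: "b \<in> {b \<in> R. relN R a b}"
        then obtain y where y: "y \<in> s" "b \<in> cyc y" using R_cases by blast
        then have "x0 = y \<or> (\<exists>z. z \<in> cyc x0 \<and> z \<in> cyc y)" using relN_iff[OF x0(1) y(1) x0(2) y(2)] b by blast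
        then have "y = x0" using False y by blast
        then show "b \<in> cyc x0" using y by simp
      qed
      show "cyc x0 \<subseteq> {b \<in> R. relN R a b}"
        using relN_iff[OF x0(1) x0(1) x0(2)] in_R[OF x0(1)] by blast
    qed
    then show ?thesis using False x0 by blast
  next
    case True
    then obtain y0 z0 where y0: "y0 \<in> s" "y0 \<noteq> x0" "z0 \<in> cyc x0" "z0 \<in> cyc y0" by blast
    have C: "{b \<in> R. relN R a b} = cyc x0 \<union> cyc y0"
    proof
      show "{b \<in> R. relN R a b} \<subseteq> cyc x0 \<union> cyc y0"
      proof
        fix b assume b: "b \<in> {b \<in> R. relN R a b}"
        then obtain y where y: "y \<in> s" "b \<in> cyc y" using R_cases by blast
        then have "x0 = y \<or> (\<exists>z. z \<in> cyc x0 \<and> z \<in> cyc y)" using relN_iff[OF x0(1) y(1) x0(2) y(2)] b by blast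
        then have "y = x0 \<or> y = y0" using F9[OF x0(1) y0(1) y(1)] y0 by blast
        then show "b \<in> cyc x0 \<union> cyc y0" using y by auto
      qed
      show "cyc x0 \<union> cyc y0 \<subseteq> {b \<in> R. relN R a b}"
      proof
        fix b assume "b \<in> cyc x0 \<union> cyc y0"
        then show "b \<in> {b \<in> R. relN R a b}"
        proof
          assume "b \<in> cyc x0" then show ?thesis using relN_iff[OF x0(1) x0(1) x0(2)] in_R[OF x0(1)] by blast
        next
          assume "b \<in> cyc y0" then show ?thesis using relN_iff[OF x0(1) y0(1) x0(2)] in_R[OF y0(1)] y0 by blast
        qed
      qed
    qed
    consider "x0 \<sqsubset> y0" | "y0 \<sqsubset> x0" using lt_total x0 y0 by blast
    then show ?thesis
    proof cases
      case 1 then show ?thesis using C y0 by blast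
    next
      case 2 then show ?thesis using C y0 by (metis sup_commute)
    qed
  qed
qed

lemma ideal_ext_lemma:
  assumes pq: "p \<sqsubset> q" and e: "e \<in> cyc p" "e \<in> cyc q" and fin: "finite (cyc p)" "finite (cyc q)"
  shows "ideal_ext_cyc (cyc p \<union> cyc q) q p \<and> is_identity (cyc p) e \<and> q * e = e"
proof -
  have ps: "p \<in> s" "q \<in> s" using pq lt_def by auto
  have ee: "e * e = e" using F5a[OF pq e] .
  have pe: "p * e = p" using F1c(1)[OF pq x_in_cyc e(2)] .
  have ge: "g * e = g" if gin: "g \<in> cyc p" for g
  proof -
    obtain a where a: "g = spow p a" "a \<ge> 1" using gin unfolding cyc_def by auto
    have "spow p a * e = spow p a" using a(2)
    proof (induction a rule: nat_induct_at_least)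
      case base then show ?case using pe by simp
    next
      case (Suc a)
      then show ?case using spow_Suc[of a p] pe by (simp add: mult.assoc)
    qed
    then show ?thesis using a by simp
  qed
  have ident: "is_identity (cyc p) e"
    unfolding is_identity_def using e(1) ge cyc_comm e(1) by metis
  have inv: "\<exists>h\<in>cyc p. g * h = e \<and> h * g = e" if gin: "g \<in> cyc p" for g
  proof -
    obtain a where a: "g = spow p a" "a \<ge> 1" using gin unfolding cyc_def by auto
    obtain j where j: "e = spow p j" "j \<ge> 1" using e(1) unfolding cyc_def by auto
    have ja: "j * a \<ge> a" using j(2) by simp
    define h where "h = spow p (j * a - a + j)"
    have h1: "j * a - a + j \<ge> 1" using j(2) ja by linarith
    have "g * h = spow p (a + (j * a - a + j))" unfolding h_def using a spow_add[of a "j * a - a + j" p] h1 by simp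
    also have "a + (j * a - a + j) = j * (a + 1)"
    proof -
      have "j * (a + 1) = j * a + j" by (simp add: algebra_simps)
      then show ?thesis using ja by linarith
    qed
    also have "spow p (j * (a + 1)) = spow e (a + 1)" using j spow_mult[of "a+1" j p] by simp
    also have "\<dots> = e" using spow_idem[of "a+1" e] ee by simp
    finally have "g * h = e" .
    moreover have "h \<in> cyc p" unfolding h_def using spow_in_cyc h1 by blast
    ultimately show ?thesis using cyc_comm gin by metis
  qed
  have grp: "is_group (cyc p)"
    unfolding is_group_def using cyc_mult ident inv by blast
  have p_ne_e: "p \<noteq> e" using ee nidem ps by blast
  have card2: "card (cyc p) \<ge> 2"
  proof -
    have "{p, e} \<subseteq> cyc p" using x_in_cyc e(1) by simp
    then have "card {p, e} \<le> card (cyc p)" using fin(1) card_mono by blast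
    then show ?thesis using p_ne_e by simp
  qed
  have closed: "\<forall>a\<in>cyc p \<union> cyc q. \<forall>b\<in>cyc p \<union> cyc q. a * b \<in> cyc p \<union> cyc q"
  proof (intro ballI)
    fix a b assume ab: "a \<in> cyc p \<union> cyc q" "b \<in> cyc p \<union> cyc q"
    show "a * b \<in> cyc p \<union> cyc q"
    proof (cases "a \<in> cyc p")
      case True
      show ?thesis
      proof (cases "b \<in> cyc p")
        case True then show ?thesis using cyc_mult \<open>a \<in> cyc p\<close> by blast
      next
        case False then have "b \<in> cyc q" using ab by blast
        then show ?thesis using F1c(1)[OF pq True] True by simp
      qed
    next
      case False
      then have aq: "a \<in> cyc q" using ab by blast
      show ?thesis
      proof (cases "b \<in> cyc p")
        case True then show ?thesis using F1c(2)[OF pq True aq] by simp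
      next
        case False then have "b \<in> cyc q" using ab by blast
        then show ?thesis using cyc_mult aq by blast
      qed
    qed
  qed
  have ideal: "is_ideal (cyc p \<union> cyc q) (cyc p)"
    unfolding is_ideal_def
  proof (intro conjI ballI)
    fix c g assume c: "c \<in> cyc p \<union> cyc q" and g: "g \<in> cyc p"
    show "c * g \<in> cyc p"
    proof (cases "c \<in> cyc p")
      case True then show ?thesis using cyc_mult g by blast
    next
      case False then have "c \<in> cyc q" using c by blast
      then show ?thesis using F1c(2)[OF pq g] g by simp
    qed
    show "g * c \<in> cyc p"
    proof (cases "c \<in> cyc p")
      case True then show ?thesis using cyc_mult g by blast
    next
      case False then have "c \<in> cyc q" using c by blast
      then show ?thesis using F1c(1)[OF pq g] g by simp
    qed
  qed simp
  have qnp: "q \<notin> cyc p"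
  proof
    assume "q \<in> cyc p"
    then have "q * q = q" using F5a[OF pq _ x_in_cyc] by blast
    then show False using nidem ps by blast
  qed
  have rees: "rees_cyclic_nil (cyc p \<union> cyc q) (cyc p) q"
  proof -
    obtain n where n: "e = spow q n" "n \<ge> 1" using e(2) unfolding cyc_def by auto
    have "q \<in> cyc p \<union> cyc q - cyc p" using x_in_cyc[of q] qnp by blast
    moreover have "cyc p \<union> cyc q - cyc p \<subseteq> cyc q" by blast
    moreover have "\<exists>n\<ge>1. spow q n \<in> cyc p" using n e(1) by blast
    ultimately show ?thesis unfolding rees_cyclic_nil_def by blast
  qed
  have qe: "q * e = e" using F1c(2)[OF pq e(1) x_in_cyc] .
  show ?thesis unfolding ideal_ext_cyc_def
    using closed fin grp card2 ideal rees ident qe by simp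
qed

end

lemma mset_pair_sub: "x \<noteq> y \<Longrightarrow> x \<in> set T \<Longrightarrow> y \<in> set T \<Longrightarrow> mset [x, y] \<subseteq># mset T"
  by (metis in_set_remove1 insert_subset_eq_iff mset.simps(2) mset_remove1
    mset_single_iff_right mset_subset_eq_single set_mset_mset)

lemma mset_rep_sub: "k \<le> count_list T y \<Longrightarrow> mset (replicate k y) \<subseteq># mset T"
  by (metis count_le_replicate_mset_subset_eq count_mset mset_replicate)

lemma subsing_finite: "(\<And>a b. a \<in> A \<Longrightarrow> b \<in> A \<Longrightarrow> a = b) \<Longrightarrow> finite A"
proof (cases "A = {}")
  case False
  then obtain a where "a \<in> A" by blast
  moreover assume "\<And>a b. a \<in> A \<Longrightarrow> b \<in> A \<Longrightarrow> a = b"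
  ultimately have "A \<subseteq> {a}" by blast
  then show ?thesis using finite_subset by blast
qed simp

lemma finite_cyc_N:
  assumes "finite (S - Idem S)" "cyc x \<subseteq> S"
  shows "finite (cyc x)"
proof -
  have "finite (cyc x \<inter> Idem S)"
    by (rule subsing_finite) (use idem_unique in \<open>auto simp: Idem_def\<close>)
  moreover have "cyc x \<subseteq> (S - Idem S) \<union> (cyc x \<inter> Idem S)" using assms(2) by blast
  ultimately show ?thesis using assms(1) finite_subset by blast
qed

lemma cyc_sub_S: "x \<in> S \<Longrightarrow> \<forall>a\<in>S. \<forall>b\<in>S. a * b \<in> S \<Longrightarrow> cyc x \<subseteq> S"
  unfolding cyc_def using spow_in by blast

locale fwd =
  fixes S :: "'a::semigroup_mult set" and T :: "'a list"
  assumes closed: "\<forall>a\<in>S. \<forall>b\<in>S. a * b \<in> S"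
    and finN: "finite (S - Idem S)"
    and TS: "set T \<subseteq> S"
    and len: "length T = card (S - Idem S)"
    and weak: "weak_ipf S T"
begin

lemma nid: "x \<in> set T \<Longrightarrow> x * x \<noteq> x"
proof
  assume x: "x \<in> set T" "x * x = x"
  have "mset [x] \<subseteq># mset T" using x(1) by simp
  then have "sprod [x] \<notin> Idem S" using weak unfolding weak_ipf_def by blast
  then show False using x TS unfolding Idem_def by auto
qed

lemma PiS_fin: "finite (PiS V)" if "mset V \<subseteq># mset T"
  by (rule finite_subset[OF subset_trans[OF Pi_mono[OF that] Pi_sub_N[OF TS closed weak]] finN])

lemma pair: assumes "x \<in> set T" "y \<in> set T" "x \<noteq> y" shows "x * y = x \<or> x * y = y"
proof (rule ccontr)
  assume H: "\<not> ?thesis"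
  have sub: "mset [x, y] \<subseteq># mset T" by (rule mset_pair_sub[OF assms(3,1,2)])
  have c: "card (PiS [x, y]) \<le> 2" using Pi_rigid[OF TS closed weak finN len sub] by simp
  have "sprod [x] \<in> PiS [x, y]" by (rule in_Pi) auto
  moreover have "sprod [y] \<in> PiS [x, y]" by (rule in_Pi) auto
  moreover have "sprod [x, y] \<in> PiS [x, y]" by (rule in_Pi) auto
  ultimately have "{x, y, x * y} \<subseteq> PiS [x, y]" by simp
  then have "card {x, y, x * y} \<le> card (PiS [x, y])" by (rule card_mono[OF PiS_fin[OF sub]])
  moreover have "card {x, y, x * y} = 3"
  proof -
    have "x * y \<noteq> x" "x * y \<noteq> y" using H by auto
    then show ?thesis using assms(3) by simp
  qed
  ultimately show False using c by simp
qed

lemma comm2: assumes "x \<in> set T" "y \<in> set T" shows "x * y = y * x"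
proof (cases "x = y")
  case False
  have a: "x * y = x \<or> x * y = y" using pair assms False by blast
  have b: "y * x = y \<or> y * x = x" using pair assms False by blast
  have nx: "x * x \<noteq> x" and ny: "y * y \<noteq> y" using nid assms by auto
  show ?thesis
  proof (rule ccontr)
    assume ne: "x * y \<noteq> y * x"
    then consider "x * y = x" "y * x = y" | "x * y = y" "y * x = x" using a b by auto
    then show False
    proof cases
      case 1
      have "x * x = (x * y) * x" using 1 by simp
      also have "\<dots> = x * (y * x)" by (simp add: mult.assoc)
      also have "\<dots> = x" using 1 by simp
      finally show False using nx by simp
    next
      case 2
      have "y * y = y * (x * y)" using 2 by simp
      also have "\<dots> = (y * x) * y" by (simp add: mult.assoc)
      also have "\<dots> = y" using 2 by simp
      finally show False using ny by simp
    qed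
  qed
qed simp

sublocale chn "set T"
  by unfold_locales (use comm2 pair nid in auto)

lemma N_eq: "PiS T = S - Idem S"
  by (rule Pi_full[OF TS closed weak finN len])

definition Pp :: "'a \<Rightarrow> 'a set" where "Pp y = spow y ` {1..count_list T y}"

lemma Pp_sub_N: "y \<in> set T \<Longrightarrow> Pp y \<subseteq> S - Idem S"
proof
  fix z assume "y \<in> set T" "z \<in> Pp y"
  then obtain k where k: "z = spow y k" "1 \<le> k" "k \<le> count_list T y" unfolding Pp_def by auto
  then have "sprod (replicate k y) \<in> PiS T" using mset_rep_sub by (intro in_Pi) auto
  then show "z \<in> S - Idem S" using k sprod_replicate[of k y] N_eq by simp
qed

lemma N_sub_Pp: "S - Idem S \<subseteq> (\<Union>y\<in>set T. Pp y)"
proof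
  fix z assume "z \<in> S - Idem S"
  then have "z \<in> PiS T" using N_eq by simp
  then obtain U where U: "z = sprod U" "U \<noteq> []" "mset U \<subseteq># mset T" unfolding PiS_def by blast
  have sU: "set U \<subseteq> set T" using set_sub_of_mset U(3) .
  obtain x where x: "x \<in> set U" "sprod U = spow x (count_list U x)" using prod_lemma[OF U(2) sU] by blast
  have "count_list U x \<ge> 1" using x(1) count_list_0_iff by (metis less_one not_le)
  moreover have "count_list U x \<le> count_list T x" using U(3)
    by (metis count_mset mset_subset_eq_count)
  ultimately have "z \<in> Pp x" unfolding Pp_def using U(1) x(2) by auto
  then show "z \<in> (\<Union>y\<in>set T. Pp y)" using x(1) sU by blast
qed

lemma card_Pp: "y \<in> set T \<Longrightarrow> card (Pp y) = count_list T y"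
proof -
  assume yT: "y \<in> set T"
  have le: "\<And>y. card (Pp y) \<le> count_list T y"
    unfolding Pp_def using card_image_le[of "{1..count_list T y}" "spow y" for y] by (metis card_atLeastAtMost diff_Suc_1 finite_atLeastAtMost)
  have fin: "\<And>y. finite (Pp y)" unfolding Pp_def by simp
  have "card (S - Idem S) \<le> card (\<Union>y\<in>set T. Pp y)"
    using N_sub_Pp card_mono fin by (meson finite_UN_I finite_set)
  also have "\<dots> \<le> (\<Sum>y\<in>set T. card (Pp y))" by (rule card_UN_le) simp
  finally have "(\<Sum>y\<in>set T. count_list T y) \<le> (\<Sum>y\<in>set T. card (Pp y))"
    using length_sum_count[of "set T" T] len by simp
  moreover have "(\<Sum>y\<in>set T. card (Pp y)) \<le> (\<Sum>y\<in>set T. count_list T y)" by (rule sum_mono) (rule le)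
  ultimately have "(\<Sum>y\<in>set T. card (Pp y)) = (\<Sum>y\<in>set T. count_list T y)" by simp
  then show ?thesis using sum_mono_inv[of "\<lambda>y. card (Pp y)" "set T" "count_list T" y] le yT by simp
qed

lemma fin_cyc: "x \<in> set T \<Longrightarrow> finite (cyc x)"
  using finite_cyc_N[OF finN cyc_sub_S] TS closed by blast

lemma Nx_eq: assumes "x \<in> set T" shows "cyc x - Idem S = Pp x"
proof
  show "cyc x - Idem S \<subseteq> Pp x"
  proof
    fix z assume z: "z \<in> cyc x - Idem S"
    have zS: "z \<in> S" using z cyc_sub_S TS assms closed by blast
    then obtain y where y: "y \<in> set T" "z \<in> Pp y" using N_sub_Pp z by blast
    show "z \<in> Pp x"
    proof (cases "y = x")
      case True then show ?thesis using y by simp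
    next
      case False
      have "z \<in> cyc y" using y(2) unfolding Pp_def using spow_in_cyc by auto
      then have "z * z = z" using F5[OF assms y(1)] False z by blast
      then show ?thesis using z zS unfolding Idem_def by blast
    qed
  qed
  show "Pp x \<subseteq> cyc x - Idem S"
    using Pp_sub_N[OF assms] unfolding Pp_def using spow_in_cyc by auto
qed

lemma count_eq: assumes "x \<in> set T" shows "count_list T x = sindex x + speriod x - 2"
proof -
  interpret fc x using fin_cyc[OF assms] by unfold_locales
  have "card (cyc x - Idem S) = sindex x + speriod x - 2" using card_nonidem cyc_sub_S TS assms closed by blast
  then show ?thesis using Nx_eq[OF assms] card_Pp[OF assms] by simp
qed

lemma mod_eq: assumes "x \<in> set T" shows "sindex x mod speriod x = 1 mod speriod x"
proof -
  interpret fc x using fin_cyc[OF assms] by unfold_locales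
  show ?thesis
  proof (rule mod_cond)
    fix k assume k: "1 \<le> k" "k \<le> sindex x + speriod x - 2"
    then have "spow x k \<in> Pp x" using count_eq[OF assms] unfolding Pp_def by simp
    then have "spow x k \<in> S - Idem S" using Pp_sub_N[OF assms] by blast
    then show "spow x k * spow x k \<noteq> spow x k" unfolding Idem_def by blast
  qed
qed

lemma R_fin: "finite R"
  using gen_eq fin_cyc by simp

lemma SR: "S - R \<subseteq> Idem S"
proof -
  have "PiS T \<subseteq> R" unfolding PiS_def gen_def using set_sub_of_mset by blast
  then show ?thesis using N_eq by blast
qed

lemma comps: assumes "C \<in> arch_components R"
  shows "(\<exists>x\<in>set T. C = cyc x \<and> finite (cyc x) \<and> sindex x mod speriod x = 1 mod speriod x)
       \<or> (\<exists>x1\<in>set T. \<exists>x2\<in>set T. ideal_ext_cyc C x1 x2 \<and> (\<exists>e. is_identity (cyc x2) e \<and> x1 * e = e))"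
proof -
  obtain a where a: "a \<in> R" "C = {b \<in> R. relN R a b}" using assms unfolding arch_components_def by blast
  from comp_struct[OF a(1)] show ?thesis
  proof
    assume "\<exists>x\<in>set T. {b \<in> R. relN R a b} = cyc x \<and> \<not> (\<exists>y\<in>set T. y \<noteq> x \<and> (\<exists>z. z \<in> cyc x \<and> z \<in> cyc y))"
    then obtain x where "x \<in> set T" "C = cyc x" using a by blast
    then show ?thesis using fin_cyc mod_eq by blast
  next
    assume "\<exists>p q. lt p q \<and> (\<exists>z. z \<in> cyc p \<and> z \<in> cyc q) \<and> {b \<in> R. relN R a b} = cyc p \<union> cyc q"
    then obtain p q z where pq: "lt p q" "z \<in> cyc p" "z \<in> cyc q" "C = cyc p \<union> cyc q" using a by blast
    have pqs: "p \<in> set T" "q \<in> set T" using pq(1) lt_def by auto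
    have "ideal_ext_cyc C q p \<and> is_identity (cyc p) z \<and> q * z = z"
      using ideal_ext_lemma[OF pq(1-3) fin_cyc[OF pqs(1)] fin_cyc[OF pqs(2)]] pq(4) by simp
    then show ?thesis using pqs by blast
  qed
qed

lemma rhs:
  "let R = gen (set T) in
     finite R \<and> commutative_on R \<and> S - R \<subseteq> Idem S \<and>
     Y_chain R \<and>
     (\<forall>x1\<in>R. \<forall>x2\<in>R. lneqN R x1 x2 \<longrightarrow> x1 * x2 = x1) \<and>
     (\<forall>C\<in>arch_components R.
        (\<exists>x\<in>set T. C = cyc x \<and> finite (cyc x) \<and>
           sindex x mod speriod x = 1 mod speriod x)
      \<or> (\<exists>x1\<in>set T. \<exists>x2\<in>set T. ideal_ext_cyc C x1 x2 \<and>
           (\<exists>e. is_identity (cyc x2) e \<and> x1 * e = e))) \<and>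
     (\<forall>x\<in>set T. count_list T x = sindex x + speriod x - 2)"
  unfolding Let_def using R_fin gen_comm SR Ychain F4 comps count_eq by blast

end


lemma disj_from_card:
  assumes "finite I" "\<And>i. i \<in> I \<Longrightarrow> finite (A i)" "card (\<Union>i\<in>I. A i) = (\<Sum>i\<in>I. card (A i))"
    "i \<in> I" "j \<in> I" "i \<noteq> j"
  shows "A i \<inter> A j = {}"
proof (rule ccontr)
  assume ne: "A i \<inter> A j \<noteq> {}"
  define J where "J = I - {i, j}"
  have fJ: "finite J" using assms(1) unfolding J_def by simp
  have U: "(\<Union>i\<in>I. A i) = (A i \<union> A j) \<union> (\<Union>k\<in>J. A k)" using assms(4,5) unfolding J_def by blast
  have fij: "finite (A i)" "finite (A j)" using assms(2,4,5) by blast+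
  have c1: "card (A i) + card (A j) = card (A i \<union> A j) + card (A i \<inter> A j)" by (rule card_Un_Int[OF fij])
  have c2: "card (A i \<inter> A j) > 0" using ne fij by (simp add: card_gt_0_iff)
  have a1: "card (\<Union>i\<in>I. A i) \<le> card (A i \<union> A j) + card (\<Union>k\<in>J. A k)" unfolding U by (rule card_Un_le)
  have a2: "card (\<Union>k\<in>J. A k) \<le> (\<Sum>k\<in>J. card (A k))" by (rule card_UN_le[OF fJ])
  have s1: "(\<Sum>k\<in>I. card (A k)) = card (A i) + (\<Sum>k\<in>I - {i}. card (A k))"
    by (rule sum.remove[OF assms(1,4)])
  have s2: "(\<Sum>k\<in>I - {i}. card (A k)) = card (A j) + (\<Sum>k\<in>I - {i} - {j}. card (A k))"
    by (rule sum.remove) (use assms in auto)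
  have "I - {i} - {j} = J" unfolding J_def by blast
  then have s3: "(\<Sum>k\<in>I. card (A k)) = card (A i) + card (A j) + (\<Sum>k\<in>J. card (A k))" using s1 s2 by simp
  show False using assms(3) c1 c2 a1 a2 s3 by linarith
qed

lemma idem_IP: assumes "x * x = x" shows "sindex x = 1" "speriod x = 1"
proof -
  have "spow x 1 = spow x 2" using assms by (simp add: numeral_2_eq_2)
  then show s1: "sindex x = 1" unfolding sindex_def
    by (intro Least_equality) (auto intro!: exI[of _ 2])
  have "spow x (1 + 1) = spow x 1" using assms by simp
  then show "speriod x = 1" unfolding speriod_def s1 by (intro Least_equality) auto
qed

lemma relN_self: "r \<in> R \<Longrightarrow> relN R r r"
proof -
  assume "r \<in> R"
  then have "spow r 2 = r * r" by (simp add: numeral_2_eq_2)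
  then have "leqN R r r" using \<open>r \<in> R\<close> unfolding leqN_def by (intro exI[of _ 2]) auto
  then show ?thesis unfolding relN_def by simp
qed

lemma comp_in: "r \<in> R \<Longrightarrow> {b \<in> R. relN R r b} \<in> arch_components R"
  unfolding arch_components_def by blast

locale bwd =
  fixes S :: "'a::semigroup_mult set" and T :: "'a list"
  assumes closed: "\<forall>a\<in>S. \<forall>b\<in>S. a * b \<in> S"
    and finN: "finite (S - Idem S)"
    and TS: "set T \<subseteq> S"
    and len: "length T = card (S - Idem S)"
    and Rf: "finite (gen (set T))"
    and Rc: "commutative_on (gen (set T))"
    and SR: "S - gen (set T) \<subseteq> Idem S"
    and Yc: "Y_chain (gen (set T))"
    and Ab: "\<forall>x1\<in>gen (set T). \<forall>x2\<in>gen (set T). lneqN (gen (set T)) x1 x2 \<longrightarrow> x1 * x2 = x1"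
    and Cp: "\<forall>C\<in>arch_components (gen (set T)).
                   (\<exists>x\<in>set T. C = cyc x \<and> finite (cyc x) \<and>
                      sindex x mod speriod x = 1 mod speriod x)
                 \<or> (\<exists>x1\<in>set T. \<exists>x2\<in>set T. ideal_ext_cyc C x1 x2 \<and>
                      (\<exists>e. is_identity (cyc x2) e \<and> x1 * e = e))"
    and Ct: "\<forall>x\<in>set T. count_list T x = sindex x + speriod x - 2"
begin

abbreviation "RR \<equiv> gen (set T)"

lemma cyc_R: "x \<in> set T \<Longrightarrow> cyc x \<subseteq> RR"
proof
  fix r assume "x \<in> set T" "r \<in> cyc x"
  then obtain n where "r = spow x n" "n \<ge> 1" unfolding cyc_def by auto
  then have "r = sprod (replicate n x)" "replicate n x \<noteq> []" using sprod_replicate[of n x] by auto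
  moreover have "set (replicate n x) \<subseteq> set T" using \<open>x \<in> set T\<close> by (auto simp: set_replicate_conv_if)
  ultimately show "r \<in> RR" unfolding gen_def by blast
qed

lemma T_R: "x \<in> set T \<Longrightarrow> x \<in> RR" using cyc_R x_in_cyc by blast

lemma R_S: "RR \<subseteq> S"
proof
  fix r assume "r \<in> RR"
  then obtain U where U: "r = sprod U" "U \<noteq> []" "set U \<subseteq> set T" unfolding gen_def by blast
  then have "set U \<subseteq> S" using TS by blast
  then show "r \<in> S" using sprod_in[OF U(2) _ closed] U(1) by blast
qed

lemma fin_cyc: "x \<in> set T \<Longrightarrow> finite (cyc x)"
  using cyc_R Rf finite_subset by blast

lemma cardN: "x \<in> set T \<Longrightarrow> card (cyc x - Idem S) = count_list T x"
proof -
  assume xT: "x \<in> set T"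
  interpret fc x using fin_cyc[OF xT] by unfold_locales
  show ?thesis using card_nonidem[of S] cyc_R[OF xT] R_S Ct xT by auto
qed

lemma nid: assumes "x \<in> set T" shows "x * x \<noteq> x"
proof
  assume "x * x = x"
  then have "count_list T x = 0" using idem_IP[of x] Ct assms by simp
  then show False using assms count_list_0_iff by metis
qed

lemma N_cover: "S - Idem S \<subseteq> (\<Union>x\<in>set T. cyc x - Idem S)"
proof
  fix r assume r: "r \<in> S - Idem S"
  then have rR: "r \<in> RR" using SR by blast
  have rC: "r \<in> {b \<in> RR. relN RR r b}" using relN_self rR by blast
  from Cp comp_in[OF rR] have
    "(\<exists>x\<in>set T. {b \<in> RR. relN RR r b} = cyc x \<and> finite (cyc x) \<and> sindex x mod speriod x = 1 mod speriod x)
     \<or> (\<exists>x1\<in>set T. \<exists>x2\<in>set T. ideal_ext_cyc {b \<in> RR. relN RR r b} x1 x2 \<and> (\<exists>e. is_identity (cyc x2) e \<and> x1 * e = e))"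
    by blast
  then obtain x where "x \<in> set T" "r \<in> cyc x"
  proof
    assume "\<exists>x\<in>set T. {b \<in> RR. relN RR r b} = cyc x \<and> finite (cyc x) \<and> sindex x mod speriod x = 1 mod speriod x"
    then show ?thesis using that rC by blast
  next
    assume "\<exists>x1\<in>set T. \<exists>x2\<in>set T. ideal_ext_cyc {b \<in> RR. relN RR r b} x1 x2 \<and> (\<exists>e. is_identity (cyc x2) e \<and> x1 * e = e)"
    then obtain x1 x2 where "x1 \<in> set T" "x2 \<in> set T" "ideal_ext_cyc {b \<in> RR. relN RR r b} x1 x2" by blast
    then show ?thesis using that rC unfolding ideal_ext_cyc_def rees_cyclic_nil_def by blast
  qed
  then show "r \<in> (\<Union>x\<in>set T. cyc x - Idem S)" using r by blast
qed

lemma disj: assumes "x \<in> set T" "y \<in> set T" "x \<noteq> y" shows "(cyc x - Idem S) \<inter> (cyc y - Idem S) = {}"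
proof (rule disj_from_card[where A = "\<lambda>x. cyc x - Idem S" and I = "set T"])
  have fin: "\<And>x. x \<in> set T \<Longrightarrow> finite (cyc x - Idem S)" using fin_cyc by blast
  have finU: "finite (\<Union>x\<in>set T. cyc x - Idem S)" by (rule finite_UN_I) (simp_all add: fin)
  have "card (S - Idem S) \<le> card (\<Union>x\<in>set T. cyc x - Idem S)"
    by (rule card_mono[OF finU N_cover])
  moreover have "card (\<Union>x\<in>set T. cyc x - Idem S) \<le> (\<Sum>x\<in>set T. card (cyc x - Idem S))"
    by (rule card_UN_le) simp
  moreover have "(\<Sum>x\<in>set T. card (cyc x - Idem S)) = card (S - Idem S)"
    using cardN length_sum_count[of "set T" T] len by simp
  ultimately show "card (\<Union>x\<in>set T. cyc x - Idem S) = (\<Sum>x\<in>set T. card (cyc x - Idem S))" by simp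
  show "\<And>i. i \<in> set T \<Longrightarrow> finite (cyc i - Idem S)" using fin by blast
qed (use assms in auto)

lemma gen_unique: assumes "x \<in> set T" "y \<in> set T" "x \<in> cyc y" shows "x = y"
proof (rule ccontr)
  assume ne: "x \<noteq> y"
  have "x \<notin> Idem S" using nid assms(1) unfolding Idem_def by blast
  then have "x \<in> (cyc x - Idem S) \<inter> (cyc y - Idem S)" using x_in_cyc assms(3) by blast
  then show False using disj[OF assms(1,2) ne] by blast
qed

lemma comm_R: "a \<in> RR \<Longrightarrow> b \<in> RR \<Longrightarrow> a * b = b * a"
  using Rc unfolding commutative_on_def by blast

lemma group_idx: assumes "x2 \<in> set T" "is_identity (cyc x2) e"
  shows "sindex x2 = 1"
proof -
  have e: "e \<in> cyc x2" "x2 * e = x2" using assms(2) x_in_cyc unfolding is_identity_def by auto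
  obtain j where j: "e = spow x2 j" "j \<ge> 1" using e(1) unfolding cyc_def by auto
  have "spow x2 (Suc j) = x2" using e(2) j spow_Suc'[of j x2] comm_R T_R[OF assms(1)] cyc_R[OF assms(1)] e(1)
    by (metis spow_Suc subsetD)
  then have "spow x2 1 = spow x2 (Suc j)" by simp
  then have "(1::nat) > 0 \<and> (\<exists>t. t > 0 \<and> t \<noteq> 1 \<and> spow x2 1 = spow x2 t)" using j by (intro conjI exI[of _ "Suc j"]) auto
  then have "sindex x2 \<le> 1" unfolding sindex_def by (rule Least_le)
  moreover have "sindex x2 > 0" using sindex_ex fin_cyc assms(1) by blast
  ultimately show ?thesis by simp
qed

lemma nil_per: assumes "x1 \<in> set T" "x2 \<in> set T" "is_identity (cyc x2) e" "x1 * e = e"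
  "n \<ge> 1" "spow x1 n \<in> cyc x2"
  shows "speriod x1 = 1"
proof -
  have eR: "e \<in> RR" using assms(3) cyc_R[OF assms(2)] unfolding is_identity_def by blast
  have pe: "spow x1 k * e = e" if "k \<ge> 1" for k
    using that
  proof (induction k rule: nat_induct_at_least)
    case base then show ?case using assms(4) by simp
  next
    case (Suc k)
    then show ?case using spow_Suc'[of k x1] assms(4) by (simp add: mult.assoc)
  qed
  have "spow x1 n * e = spow x1 n" using assms(3,6) unfolding is_identity_def by blast
  then have xn: "spow x1 n = e" using pe[OF assms(5)] by simp
  have "spow x1 (n + 1) = spow x1 n * x1" using spow_Suc'[of n x1] assms(5) by simp
  also have "\<dots> = e * x1" using xn by simp
  also have "\<dots> = x1 * e" using comm_R eR T_R[OF assms(1)] by metis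
  also have "\<dots> = spow x1 n" using assms(4) xn by simp
  finally have nn: "spow x1 n = spow x1 (n + 1)" by simp
  interpret fc x1 using fin_cyc[OF assms(1)] by unfold_locales
  have nI: "n \<ge> sindex x1"
    using sindex_min[of n x1 "n+1"] nn assms(5) by (metis add_gr_0 less_numeral_extra(1) not_less n_not_Suc_n Suc_eq_plus1 le_less_trans less_le_trans zero_less_one) 
  have "spow x1 (sindex x1 + 1) = spow x1 (sindex x1 + 1 + n * speriod x1)"
    using pmul[of "sindex x1 + 1" n] by simp
  also have "\<dots> = spow x1 ((sindex x1 + n * speriod x1) + 1)" by (simp add: algebra_simps)
  also have "\<dots> = spow x1 (sindex x1 + n * speriod x1)"
  proof -
    have "sindex x1 + n * speriod x1 \<ge> n" using P_pos by (simp add: add_increasing)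
    then show ?thesis using per1[OF assms(5) nn] by simp
  qed
  also have "\<dots> = spow x1 (sindex x1)" using pmul by simp
  finally have "0 < (1::nat) \<and> spow x1 (sindex x1 + 1) = spow x1 (sindex x1)" by simp
  then have "speriod x1 \<le> 1" unfolding speriod_def by (rule Least_le)
  then show ?thesis using P_pos by simp
qed

lemma ext_facts: assumes "x1 \<in> set T" "x2 \<in> set T" "ideal_ext_cyc C x1 x2" "is_identity (cyc x2) e" "x1 * e = e"
  shows "sindex x1 mod speriod x1 = 1 mod speriod x1" "sindex x2 mod speriod x2 = 1 mod speriod x2"
    "x1 * x2 = x2" "x2 * x1 = x2"
proof -
  obtain n where n: "n \<ge> 1" "spow x1 n \<in> cyc x2" using assms(3) unfolding ideal_ext_cyc_def rees_cyclic_nil_def by blast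
  show "sindex x1 mod speriod x1 = 1 mod speriod x1" using nil_per[OF assms(1,2,4,5) n] by simp
  show "sindex x2 mod speriod x2 = 1 mod speriod x2" using group_idx[OF assms(2,4)] by simp
  have "e * x2 = x2" using assms(4) x_in_cyc unfolding is_identity_def by blast
  then show x12: "x1 * x2 = x2" using assms(5) by (metis mult.assoc)
  show "x2 * x1 = x2" using x12 comm_R T_R assms(1,2) by metis
qed

lemma comp_cases: assumes "x \<in> set T"
  obtains (one) "{b \<in> RR. relN RR x b} = cyc x" "sindex x mod speriod x = 1 mod speriod x"
  | (two) x1 x2 e where "x1 \<in> set T" "x2 \<in> set T" "ideal_ext_cyc {b \<in> RR. relN RR x b} x1 x2"
      "is_identity (cyc x2) e" "x1 * e = e" "x = x1 \<or> x = x2"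
proof -
  have xR: "x \<in> RR" using T_R assms by blast
  have xC: "x \<in> {b \<in> RR. relN RR x b}" using relN_self xR by blast
  from Cp comp_in[OF xR] have
    "(\<exists>z\<in>set T. {b \<in> RR. relN RR x b} = cyc z \<and> finite (cyc z) \<and> sindex z mod speriod z = 1 mod speriod z)
     \<or> (\<exists>x1\<in>set T. \<exists>x2\<in>set T. ideal_ext_cyc {b \<in> RR. relN RR x b} x1 x2 \<and> (\<exists>e. is_identity (cyc x2) e \<and> x1 * e = e))"
    by blast
  then show ?thesis
  proof
    assume "\<exists>z\<in>set T. {b \<in> RR. relN RR x b} = cyc z \<and> finite (cyc z) \<and> sindex z mod speriod z = 1 mod speriod z"
    then obtain z where z: "z \<in> set T" "{b \<in> RR. relN RR x b} = cyc z" "sindex z mod speriod z = 1 mod speriod z" by blast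
    then have "x = z" using gen_unique[OF assms z(1)] xC by blast
    then show ?thesis using one z by simp
  next
    assume "\<exists>x1\<in>set T. \<exists>x2\<in>set T. ideal_ext_cyc {b \<in> RR. relN RR x b} x1 x2 \<and> (\<exists>e. is_identity (cyc x2) e \<and> x1 * e = e)"
    then obtain x1 x2 e where h: "x1 \<in> set T" "x2 \<in> set T" "ideal_ext_cyc {b \<in> RR. relN RR x b} x1 x2"
      "is_identity (cyc x2) e" "x1 * e = e" by blast
    have "x \<in> cyc x1 \<or> x \<in> cyc x2" using h(3) xC unfolding ideal_ext_cyc_def rees_cyclic_nil_def by blast
    then have "x = x1 \<or> x = x2" using gen_unique assms h(1,2) by blast
    then show ?thesis using two h by blast
  qed
qed

lemma mod_all: assumes "x \<in> set T" shows "sindex x mod speriod x = 1 mod speriod x"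
  using assms
proof (cases rule: comp_cases)
  case (two x1 x2 e)
  then show ?thesis using ext_facts[OF two(1-5)] by blast
qed simp

lemma absb_T: assumes "x \<in> set T" "y \<in> set T" "x \<noteq> y" shows "x * y = x \<or> x * y = y"
proof (cases "relN RR x y")
  case True
  have yR: "y \<in> RR" using T_R assms by blast
  have yC: "y \<in> {b \<in> RR. relN RR x b}" using True yR by blast
  show ?thesis using assms(1)
  proof (cases rule: comp_cases)
    case one
    then have "y = x" using gen_unique[OF assms(2,1)] yC by blast
    then show ?thesis using assms(3) by simp
  next
    case (two x1 x2 e)
    have "y \<in> cyc x1 \<or> y \<in> cyc x2" using two(3) yC unfolding ideal_ext_cyc_def rees_cyclic_nil_def by blast
    then have "y = x1 \<or> y = x2" using gen_unique assms(2) two(1,2) by blast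
    then show ?thesis using two(6) ext_facts[OF two(1-5)] assms(3) by auto
  qed
next
  case False
  have xyR: "x \<in> RR" "y \<in> RR" using T_R assms by auto
  have "leqN RR x y \<or> leqN RR y x" using Yc xyR unfolding Y_chain_def by blast
  then have "lneqN RR x y \<or> lneqN RR y x" using False unfolding lneqN_def relN_def by blast
  then show ?thesis using Ab xyR comm_R by metis
qed

sublocale chn "set T"
  by unfold_locales (use comm_R T_R absb_T nid in auto)

lemma weak: "weak_ipf S T"
  unfolding weak_ipf_def
proof (intro allI impI)
  fix U assume U: "U \<noteq> []" "mset U \<subseteq># mset T"
  have sU: "set U \<subseteq> set T" using set_sub_of_mset U(2) .
  obtain x where x: "x \<in> set U" "sprod U = spow x (count_list U x)" using prod_lemma[OF U(1) sU] by blast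
  have xT: "x \<in> set T" using x(1) sU by blast
  have c1: "count_list U x \<ge> 1" using x(1) count_list_0_iff by (metis less_one not_le)
  have c2: "count_list U x \<le> sindex x + speriod x - 2" using U(2) Ct xT
    by (metis count_mset mset_subset_eq_count)
  interpret fc x using fin_cyc[OF xT] by unfold_locales
  have "spow x (count_list U x) * spow x (count_list U x) \<noteq> spow x (count_list U x)"
    using nonidem_small[OF mod_all[OF xT] c1 c2] .
  then show "sprod U \<notin> Idem S" using x(2) unfolding Idem_def by simp
qed

end


theorem proposition4p2:
  fixes S :: "'a::semigroup_mult set"
  assumes nonempty: "S \<noteq> {}"
    and closed: "\<forall>x\<in>S. \<forall>y\<in>S. x * y \<in> S"
  shows
    "(EB_I S \<noteq> \<infinity> \<or> EB_SI S \<noteq> \<infinity> \<longrightarrow> (\<forall>x\<in>S. finite (cyc x)))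
     \<and> EB_I S \<le> EB_SI S
     \<and> (commutative_on S \<longrightarrow> EB_I S = EB_SI S)
     \<and> (finite (S - Idem S) \<longrightarrow>
         (EB_I S = enat (card (S - Idem S) + 1) \<longleftrightarrow>
          (\<exists>T. set T \<subseteq> S \<and> length T = card (S - Idem S) \<and>
             (let R = gen (set T) in
                finite R \<and> commutative_on R \<and> S - R \<subseteq> Idem S \<and>
                Y_chain R \<and>
                (\<forall>x1\<in>R. \<forall>x2\<in>R. lneqN R x1 x2 \<longrightarrow> x1 * x2 = x1) \<and>
                (\<forall>C\<in>arch_components R.
                   (\<exists>x\<in>set T. C = cyc x \<and> finite (cyc x) \<and>
                      sindex x mod speriod x = 1 mod speriod x)
                 \<or> (\<exists>x1\<in>set T. \<exists>x2\<in>set T. ideal_ext_cyc C x1 x2 \<and>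
                      (\<exists>e. is_identity (cyc x2) e \<and> x1 * e = e))) \<and>
                (\<forall>x\<in>set T. count_list T x = sindex x + speriod x - 2)))))"
proof (intro conjI impI)
  show "\<forall>x\<in>S. finite (cyc x)" if "EB_I S \<noteq> \<infinity> \<or> EB_SI S \<noteq> \<infinity>"
    using part1[OF that] by blast
  show "EB_I S \<le> EB_SI S" by (rule EB_I_le_SI)
  show "EB_I S = EB_SI S" if "commutative_on S" using EB_I_eq_SI[OF that] .
  assume finN: "finite (S - Idem S)"
  have closed': "\<forall>a\<in>S. \<forall>b\<in>S. a * b \<in> S" using closed by blast
  show "(EB_I S = enat (card (S - Idem S) + 1) \<longleftrightarrow>
          (\<exists>T. set T \<subseteq> S \<and> length T = card (S - Idem S) \<and>
             (let R = gen (set T) in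
                finite R \<and> commutative_on R \<and> S - R \<subseteq> Idem S \<and>
                Y_chain R \<and>
                (\<forall>x1\<in>R. \<forall>x2\<in>R. lneqN R x1 x2 \<longrightarrow> x1 * x2 = x1) \<and>
                (\<forall>C\<in>arch_components R.
                   (\<exists>x\<in>set T. C = cyc x \<and> finite (cyc x) \<and>
                      sindex x mod speriod x = 1 mod speriod x)
                 \<or> (\<exists>x1\<in>set T. \<exists>x2\<in>set T. ideal_ext_cyc C x1 x2 \<and>
                      (\<exists>e. is_identity (cyc x2) e \<and> x1 * e = e))) \<and>
                (\<forall>x\<in>set T. count_list T x = sindex x + speriod x - 2))))"
    (is "?L \<longleftrightarrow> (\<exists>T. ?P T)")
  proof -
    have "?L \<longleftrightarrow> (\<exists>T. set T \<subseteq> S \<and> length T = card (S - Idem S) \<and> weak_ipf S T)"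
      by (rule EB_I_eq_iff[OF closed' finN])
    also have "\<dots> \<longleftrightarrow> (\<exists>T. ?P T)"
    proof
      assume "\<exists>T. set T \<subseteq> S \<and> length T = card (S - Idem S) \<and> weak_ipf S T"
      then obtain T where T: "set T \<subseteq> S" "length T = card (S - Idem S)" "weak_ipf S T" by blast
      interpret fwd S T using closed' finN T by unfold_locales
      show "\<exists>T. ?P T" using T rhs by blast
    next
      assume "\<exists>T. ?P T"
      then obtain T where T: "?P T" by blast
      interpret bwd S T using closed' finN T unfolding Let_def by unfold_locales auto
      show "\<exists>T. set T \<subseteq> S \<and> length T = card (S - Idem S) \<and> weak_ipf S T" using T weak by blast
    qed
    finally show ?thesis .
  qed
qed


end
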